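(* Let $F$ be a finitely generated group whose commutator subgroup has infinite index in $F$, and let $G$ be an arbitrary group. Then the number of surjective homomorphisms $F\to G$ is divisible by the order $|G'|$ of the commutator subgroup of $G$.
   Context: Groups need not be finite; divisibility is understood in the sense of cardinal arithmetic: an infinite cardinal is divisible by every nonzero cardinal not exceeding it. *)

theory Defs
  imports "HOL-Algebra.Algebra" "HOL-Library.Equipollence"
begin

text \<open>The witness C may be taken of the
  element type of A (if A is infinite, take C a subset of A).\<close>
definition card_dvd :: "'b set \<Rightarrow> 'a set \<Rightarrow> bool" where
  "card_dvd B A \<longleftrightarrow> (\<exists>C :: 'a set. A \<approx> B \<times> C)"

text \<open>Surjective homomorphisms F \<rightarrow> G, as functions on the carrier of F
  (extensional, so that each homomorphism is counted exactly once).\<close>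
definition surj_homs :: "('a, 'c) monoid_scheme \<Rightarrow> ('b, 'd) monoid_scheme \<Rightarrow> ('a \<Rightarrow> 'b) set" where
  "surj_homs F G = epi F G \<inter> extensional (carrier F)"

definition finitely_generated_group :: "('a, 'c) monoid_scheme \<Rightarrow> bool" where
  "finitely_generated_group F \<longleftrightarrow>
     (\<exists>S. finite S \<and> S \<subseteq> carrier F \<and> generate F S = carrier F)"

end

theory Submission
  imports Defs
begin

lemma partition_eqpoll:
  fixes E :: "'e set" and B :: "'b set"
  assumes eq: "equiv E R" and cls: "\<And>Q. Q \<in> E // R \<Longrightarrow> \<exists>Y::'y set. Q \<approx> B \<times> Y"
  shows "\<exists>Y::('e set \<times> 'y) set. E \<approx> B \<times> Y"
proof -
  have "\<forall>Q\<in>E//R. \<exists>p::(('b \<times> 'y \<Rightarrow> 'e) \<times> 'y set). bij_betw (fst p) (B \<times> snd p) Q"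
  proof
    fix Q assume "Q \<in> E//R"
    then obtain Y :: "'y set" where "Q \<approx> B \<times> Y" using cls by blast
    then have "B \<times> Y \<approx> Q" by (rule eqpoll_sym)
    then obtain f where "bij_betw f (B \<times> Y) Q" unfolding eqpoll_def by blast
    then show "\<exists>p::(('b \<times> 'y \<Rightarrow> 'e) \<times> 'y set). bij_betw (fst p) (B \<times> snd p) Q"
      by (intro exI[of _ "(f, Y)"]) simp
  qed
  then have "\<exists>p::'e set \<Rightarrow> (('b \<times> 'y \<Rightarrow> 'e) \<times> 'y set). \<forall>Q\<in>E//R. bij_betw (fst (p Q)) (B \<times> snd (p Q)) Q" by (rule bchoice)
  then obtain p :: "'e set \<Rightarrow> (('b \<times> 'y \<Rightarrow> 'e) \<times> 'y set)"
    where p: "\<And>Q. Q \<in> E//R \<Longrightarrow> bij_betw (fst (p Q)) (B \<times> snd (p Q)) Q"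
    by blast
  define Y where "Y = Sigma (E//R) (\<lambda>Q. snd (p Q))"
  define h where "h = (\<lambda>(b::'b, (Q::'e set, y::'y)). fst (p Q) (b, y))"
  have "bij_betw h (B \<times> Y) E"
    unfolding bij_betw_def
  proof
    show "inj_on h (B \<times> Y)"
    proof (rule inj_onI)
      fix u v assume u: "u \<in> B \<times> Y" and v: "v \<in> B \<times> Y" and huv: "h u = h v"
      obtain b Q y where u': "u = (b, Q, y)" by (cases u) auto
      obtain b' Q' y' where v': "v = (b', Q', y')" by (cases v) auto
      have a: "(b, Q, y) \<in> B \<times> Y" "(b', Q', y') \<in> B \<times> Y" "h (b, Q, y) = h (b', Q', y')"
        using u v huv u' v' by auto
      have Q: "Q \<in> E//R" "y \<in> snd (p Q)" "b \<in> B" using a(1) by (auto simp: Y_def)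
      have Q': "Q' \<in> E//R" "y' \<in> snd (p Q')" "b' \<in> B" using a(2) by (auto simp: Y_def)
      have "h (b, Q, y) \<in> Q" using p[OF Q(1)] Q unfolding h_def bij_betw_def by auto
      moreover have "h (b', Q', y') \<in> Q'" using p[OF Q'(1)] Q' unfolding h_def bij_betw_def by auto
      ultimately have "Q = Q'" using a(3) quotient_disj[OF eq Q(1) Q'(1)] by auto
      then have "(b, Q, y) = (b', Q', y')"
        using a(3) p[OF Q(1)] Q Q' unfolding h_def bij_betw_def inj_on_def by auto
      then show "u = v" using u' v' by simp
    qed
    show "h ` (B \<times> Y) = E"
    proof
      show "h ` (B \<times> Y) \<subseteq> E"
      proof clarify
        fix b Q y assume "b \<in> B" "(Q, y) \<in> Y"
        then have "Q \<in> E//R" "y \<in> snd (p Q)" by (auto simp: Y_def)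
        then have "h (b, Q, y) \<in> Q" using p \<open>b \<in> B\<close> unfolding h_def bij_betw_def by auto
        then show "h (b, Q, y) \<in> E" using \<open>Q \<in> E//R\<close> eq
          using in_quotient_imp_subset by blast
      qed
      show "E \<subseteq> h ` (B \<times> Y)"
      proof
        fix x assume "x \<in> E"
        then have Qx: "R``{x} \<in> E//R" by (rule quotientI)
        have "x \<in> R``{x}" using eq \<open>x \<in> E\<close> by (meson equiv_class_self)
        then have "x \<in> fst (p (R``{x})) ` (B \<times> snd (p (R``{x})))"
          using p[OF Qx] unfolding bij_betw_def by simp
        then obtain b y where "b \<in> B" "y \<in> snd (p (R``{x}))" "fst (p (R``{x})) (b, y) = x"
          by auto
        then show "x \<in> h ` (B \<times> Y)" using Qx unfolding h_def Y_def
          by (intro image_eqI[of _ _ "(b, R``{x}, y)"]) auto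
      qed
    qed
  qed
  then have "B \<times> Y \<approx> E" unfolding eqpoll_def by blast
  then show ?thesis using eqpoll_sym by blast
qed

lemma card_dvd_from:
  assumes "E \<approx> B \<times> (Y::'y set)" "B \<noteq> {}"
  shows "card_dvd B (E::'e set)"
proof -
  obtain b where b: "b \<in> B" using assms(2) by blast
  have "Y \<lesssim> B \<times> Y" unfolding lepoll_def
    by (rule exI[of _ "\<lambda>y. (b, y)"]) (auto simp: inj_on_def b)
  also have "B \<times> Y \<lesssim> E" using assms(1) eqpoll_sym eqpoll_imp_lepoll by blast
  finally obtain f where f: "inj_on f Y" "f ` Y \<subseteq> E" unfolding lepoll_def by blast
  have "Y \<approx> f ` Y" using f(1) by (simp add: eqpoll_sym inj_on_image_eqpoll_self)
  then have "B \<times> Y \<approx> B \<times> f ` Y" by (simp add: times_eqpoll_cong)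
  then have "E \<approx> B \<times> f ` Y" using assms(1) eqpoll_trans by blast
  then show ?thesis unfolding card_dvd_def by blast
qed

lemma (in group) gcancel1 [simp]: "x \<in> carrier G \<Longrightarrow> y \<in> carrier G \<Longrightarrow> x \<otimes> (inv x \<otimes> y) = y"
  by (simp add: m_assoc[symmetric])
lemma (in group) gcancel2 [simp]: "x \<in> carrier G \<Longrightarrow> y \<in> carrier G \<Longrightarrow> inv x \<otimes> (x \<otimes> y) = y"
  by (simp add: m_assoc[symmetric])

lemmas (in group) gsimps = m_assoc inv_mult_group

lemma (in group) transversal:
  assumes H: "subgroup H G" and Z: "subgroup Z G" and ZH: "Z \<subseteq> H"
  shows "\<exists>T \<subseteq> H. bij_betw (\<lambda>(r,z). r \<otimes> z) (T \<times> Z) H"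
proof -
  interpret H: subgroup H G by (rule H)
  interpret Z: subgroup Z G by (rule Z)
  define rel where "rel = (\<lambda>x y. inv x \<otimes> y \<in> Z)"
  have trans1: "rel x b" if "rel x a" "rel a b" "x \<in> H" "a \<in> H" "b \<in> H" for x a b
  proof -
    have "inv x \<otimes> b = (inv x \<otimes> a) \<otimes> (inv a \<otimes> b)"
      using that H.subset by (auto simp: gsimps)
    then show ?thesis using that unfolding rel_def by (simp add: Z.m_closed)
  qed
  have trans2: "rel x a" if "rel x b" "rel a b" "x \<in> H" "a \<in> H" "b \<in> H" for x a b
  proof -
    have "inv x \<otimes> a = (inv x \<otimes> b) \<otimes> inv (inv a \<otimes> b)"
      using that H.subset by (auto simp: gsimps)
    then show ?thesis using that unfolding rel_def by (simp add: Z.m_closed Z.m_inv_closed)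
  qed
  define rep where "rep = (\<lambda>h. SOME x. x \<in> H \<and> rel x h)"
  have rep: "rep h \<in> H \<and> rel (rep h) h" if "h \<in> H" for h
  proof -
    have "h \<in> H \<and> rel h h" using that unfolding rel_def by (simp add: Z.one_closed)
    then show ?thesis unfolding rep_def by (rule someI)
  qed
  have rep_eq: "rep a = rep b" if "rel a b" "a \<in> H" "b \<in> H" for a b
  proof -
    have "(\<lambda>x. x \<in> H \<and> rel x a) = (\<lambda>x. x \<in> H \<and> rel x b)"
      using trans1 trans2 that by blast
    then show ?thesis unfolding rep_def by simp
  qed
  have reprep: "rep (rep h) = rep h" if "h \<in> H" for h
    using rep_eq[of "rep h" h] rep[OF that] that by simp
  define T where "T = rep ` H"
  have "bij_betw (\<lambda>(r,z). r \<otimes> z) (T \<times> Z) H"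
    unfolding bij_betw_def
  proof
    show "inj_on (\<lambda>(r,z). r \<otimes> z) (T \<times> Z)"
    proof (rule inj_onI)
      fix u v assume u: "u \<in> T \<times> Z" and v: "v \<in> T \<times> Z" and uv: "(\<lambda>(r,z). r \<otimes> z) u = (\<lambda>(r,z). r \<otimes> z) v"
      obtain a z where u': "u = (rep a, z)" "a \<in> H" "z \<in> Z" using u unfolding T_def by auto
      obtain a' z' where v': "v = (rep a', z')" "a' \<in> H" "z' \<in> Z" using v unfolding T_def by auto
      have a: "a \<in> H" "z \<in> Z" "a' \<in> H" "z' \<in> Z" "rep a \<otimes> z = rep a' \<otimes> z'"
        using u' v' uv by auto
      have ra: "rep a \<in> H" "rep a' \<in> H" using rep a by auto
      have zc: "z \<in> carrier G" "z' \<in> carrier G" using a Z.subset by auto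
      have "inv (rep a') \<otimes> rep a = z' \<otimes> inv z"
      proof -
        have "inv (rep a') \<otimes> rep a \<otimes> z = inv (rep a') \<otimes> (rep a' \<otimes> z')"
          using a(5) ra zc H.subset by (auto simp: m_assoc)
        then show ?thesis using ra zc H.subset
          by (simp add: inv_solve_right m_assoc)
      qed
      then have "rel (rep a') (rep a)" unfolding rel_def using a by (simp add: Z.m_closed Z.m_inv_closed)
      then have "rep (rep a') = rep (rep a)" using rep_eq ra by blast
      then have e: "rep a' = rep a" using reprep a by simp
      have "rep a \<otimes> z = rep a \<otimes> z'" using a(5) e by simp
      then have "z = z'" using l_cancel[of "rep a" z z'] ra zc H.mem_carrier by blast
      then show "u = v" using e u' v' by simp
    qed
    show "(\<lambda>(r,z). r \<otimes> z) ` (T \<times> Z) = H"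
    proof
      show "(\<lambda>(r,z). r \<otimes> z) ` (T \<times> Z) \<subseteq> H"
        using rep ZH unfolding T_def by auto
      show "H \<subseteq> (\<lambda>(r,z). r \<otimes> z) ` (T \<times> Z)"
      proof
        fix h assume h: "h \<in> H"
        have "h = rep h \<otimes> (inv (rep h) \<otimes> h)"
          using rep[OF h] h H.subset by (simp add: m_assoc[symmetric])
        moreover have "inv (rep h) \<otimes> h \<in> Z" using rep[OF h] unfolding rel_def by simp
        ultimately show "h \<in> (\<lambda>(r,z). r \<otimes> z) ` (T \<times> Z)"
          unfolding T_def using h by (intro image_eqI[of _ _ "(rep h, inv (rep h) \<otimes> h)"]) auto
      qed
    qed
  qed
  moreover have "T \<subseteq> H" using rep unfolding T_def by auto
  ultimately show ?thesis by blast
qed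

lemma (in group) comm_move: "c \<in> carrier G \<Longrightarrow> h \<in> carrier G \<Longrightarrow> w \<in> carrier G \<Longrightarrow> c \<otimes> h = h \<otimes> c
   \<Longrightarrow> c \<otimes> (h \<otimes> w) = h \<otimes> (c \<otimes> w)"
  by (simp add: m_assoc[symmetric])

lemma (in group) conj_pow:
  assumes H: "H \<subseteq> carrier G" and g: "g \<in> carrier G" and c: "c \<in> carrier G"
    and n1: "\<And>h. h \<in> H \<Longrightarrow> g \<otimes> h \<otimes> inv g \<in> H"
    and n2: "\<And>h. h \<in> H \<Longrightarrow> inv g \<otimes> h \<otimes> g \<in> H"
    and cc: "\<And>h. h \<in> H \<Longrightarrow> c \<otimes> h = h \<otimes> c"
  shows "\<forall>h\<in>H. (g \<otimes> c) [^] (n::int) \<otimes> h \<otimes> inv ((g \<otimes> c) [^] n) = g [^] n \<otimes> h \<otimes> inv (g [^] n)"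
proof (induction n rule: int_induct[where k=0])
  case base
  then show ?case using H by auto
next
  case (step1 i)
  show ?case
  proof
    fix h assume h: "h \<in> H"
    have hc: "h \<in> carrier G" using h H by auto
    have "(g \<otimes> c) [^] (i+1) \<otimes> h \<otimes> inv ((g \<otimes> c) [^] (i+1))
        = (g \<otimes> c) [^] i \<otimes> (g \<otimes> h \<otimes> inv g) \<otimes> inv ((g \<otimes> c) [^] i)"
      using g c hc cc[OF h] by (simp add: int_pow_mult gsimps comm_move)
    also have "\<dots> = g [^] i \<otimes> (g \<otimes> h \<otimes> inv g) \<otimes> inv (g [^] i)"
      using step1(2) n1[OF h] by blast
    also have "\<dots> = g [^] (i+1) \<otimes> h \<otimes> inv (g [^] (i+1))"
      using g c hc by (simp add: int_pow_mult gsimps)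
    finally show "(g \<otimes> c) [^] (i+1) \<otimes> h \<otimes> inv ((g \<otimes> c) [^] (i+1)) = g [^] (i+1) \<otimes> h \<otimes> inv (g [^] (i+1))" .
  qed
next
  case (step2 i)
  show ?case
  proof
    fix h assume h: "h \<in> H"
    have hc: "h \<in> carrier G" using h H by auto
    have e: "(x::'a) [^] (i - 1) = x [^] i \<otimes> inv x" if "x \<in> carrier G" for x
      using int_pow_mult[OF that, of i "-1"] that by (simp add: int_pow_neg)
    let ?h' = "inv g \<otimes> h \<otimes> g"
    have h'H: "?h' \<in> H" using n2[OF h] .
    have h'c: "?h' \<in> carrier G" using h'H H by auto
    have inner: "inv (g \<otimes> c) \<otimes> h \<otimes> (g \<otimes> c) = ?h'"
    proof -
      have "inv (g \<otimes> c) \<otimes> h \<otimes> (g \<otimes> c) = inv c \<otimes> (?h' \<otimes> c)"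
        using g c hc by (simp add: gsimps)
      also have "\<dots> = inv c \<otimes> (c \<otimes> ?h')" using cc[OF h'H] by simp
      also have "\<dots> = ?h'" using c h'c by simp
      finally show ?thesis .
    qed
    have "(g \<otimes> c) [^] (i - 1) \<otimes> h \<otimes> inv ((g \<otimes> c) [^] (i - 1))
        = (g \<otimes> c) [^] i \<otimes> (inv (g \<otimes> c) \<otimes> h \<otimes> (g \<otimes> c)) \<otimes> inv ((g \<otimes> c) [^] i)"
      using g c hc by (simp add: e gsimps)
    also have "\<dots> = (g \<otimes> c) [^] i \<otimes> (inv g \<otimes> h \<otimes> g) \<otimes> inv ((g \<otimes> c) [^] i)"
      using inner by simp
    also have "\<dots> = g [^] i \<otimes> (inv g \<otimes> h \<otimes> g) \<otimes> inv (g [^] i)"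
      using step2(2) n2[OF h] by blast
    also have "\<dots> = g [^] (i - 1) \<otimes> h \<otimes> inv (g [^] (i - 1))"
      using g c hc by (simp add: e gsimps)
    finally show "(g \<otimes> c) [^] (i - 1) \<otimes> h \<otimes> inv ((g \<otimes> c) [^] (i - 1)) = g [^] (i - 1) \<otimes> h \<otimes> inv (g [^] (i - 1))" .
  qed
qed

locale twist = G: group G + F: group F
  for G :: "('b, 'd) monoid_scheme" (structure) and F :: "('a, 'c) monoid_scheme" +
  fixes chi :: "'a \<Rightarrow> int" and t :: 'a
  assumes t_in: "t \<in> carrier F" and chi_t: "chi t = 1"
    and chi_mult: "\<And>x y. x \<in> carrier F \<Longrightarrow> y \<in> carrier F \<Longrightarrow> chi (x \<otimes>\<^bsub>F\<^esub> y) = chi x + chi y"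
begin

definition K where "K = {x \<in> carrier F. chi x = 0}"

lemma chi_one: "chi \<one>\<^bsub>F\<^esub> = 0"
  using chi_mult[of "\<one>\<^bsub>F\<^esub>" "\<one>\<^bsub>F\<^esub>"] by simp

lemma chi_inv: "x \<in> carrier F \<Longrightarrow> chi (inv\<^bsub>F\<^esub> x) = - chi x"
  using chi_mult[of x "inv\<^bsub>F\<^esub> x"] chi_one by simp

lemma chi_natpow: "x \<in> carrier F \<Longrightarrow> chi (x [^]\<^bsub>F\<^esub> (n::nat)) = int n * chi x"
  by (induction n) (simp_all add: chi_one chi_mult algebra_simps)

lemma chi_pow: "x \<in> carrier F \<Longrightarrow> chi (x [^]\<^bsub>F\<^esub> (n::int)) = n * chi x"
  by (simp add: int_pow_def2 chi_natpow chi_inv del: pow_nat)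

lemma decomp_K: "x \<in> carrier F \<Longrightarrow> x \<otimes>\<^bsub>F\<^esub> inv\<^bsub>F\<^esub> (t [^]\<^bsub>F\<^esub> chi x) \<in> K"
  unfolding K_def using t_in by (simp add: chi_mult chi_inv chi_pow chi_t)

lemma decomp_eq: "x \<in> carrier F \<Longrightarrow> x = (x \<otimes>\<^bsub>F\<^esub> inv\<^bsub>F\<^esub> (t [^]\<^bsub>F\<^esub> n)) \<otimes>\<^bsub>F\<^esub> t [^]\<^bsub>F\<^esub> (n::int)"
  using t_in by (simp add: F.m_assoc)

lemma K_sub: "K \<subseteq> carrier F" unfolding K_def by auto

lemma K_conj: "k \<in> K \<Longrightarrow> y \<in> carrier F \<Longrightarrow> y \<otimes>\<^bsub>F\<^esub> k \<otimes>\<^bsub>F\<^esub> inv\<^bsub>F\<^esub> y \<in> K"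
  unfolding K_def by (simp add: chi_mult chi_inv)

lemma hom_eqI:
  assumes f: "f \<in> hom F G" and f': "f' \<in> hom F G"
    and e: "f \<in> extensional (carrier F)" "f' \<in> extensional (carrier F)"
    and onK: "\<And>k. k \<in> K \<Longrightarrow> f k = f' k" and ont: "f t = f' t"
  shows "f = f'"
proof (rule extensionalityI[OF e])
  fix x assume x: "x \<in> carrier F"
  let ?k = "x \<otimes>\<^bsub>F\<^esub> inv\<^bsub>F\<^esub> (t [^]\<^bsub>F\<^esub> chi x)"
  have k: "?k \<in> K" using decomp_K[OF x] .
  have kc: "?k \<in> carrier F" using k K_sub by auto
  have xe: "x = ?k \<otimes>\<^bsub>F\<^esub> t [^]\<^bsub>F\<^esub> chi x" using decomp_eq[OF x] .
  interpret f: group_hom F G f using f by (simp add: group_hom_def group_hom_axioms_def F.group_axioms G.group_axioms)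
  interpret f': group_hom F G f' using f' by (simp add: group_hom_def group_hom_axioms_def F.group_axioms G.group_axioms)
  have "f x = f (?k \<otimes>\<^bsub>F\<^esub> t [^]\<^bsub>F\<^esub> chi x)" using xe by (rule arg_cong)
  also have "\<dots> = f ?k \<otimes> f t [^] chi x"
    using kc t_in f.hom_int_pow f.hom_mult by simp
  also have "\<dots> = f' ?k \<otimes> f' t [^] chi x" using onK[OF k] ont by simp
  also have "\<dots> = f' (?k \<otimes>\<^bsub>F\<^esub> t [^]\<^bsub>F\<^esub> chi x)"
    using kc t_in f'.hom_int_pow f'.hom_mult by simp
  also have "\<dots> = f' x" using xe[symmetric] by (rule arg_cong)
  finally show "f x = f' x" .
qed

end

context twist begin

lemma ghom: "\<phi> \<in> hom F G \<Longrightarrow> group_hom F G \<phi>"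
  by (simp add: group_hom_def group_hom_axioms_def F.group_axioms G.group_axioms)

lemma K_subgroup: "subgroup K F"
proof (rule F.subgroupI)
  show "K \<subseteq> carrier F" by (rule K_sub)
  show "K \<noteq> {}" using chi_one unfolding K_def by auto
  show "inv\<^bsub>F\<^esub> a \<in> K" if "a \<in> K" for a using that unfolding K_def by (simp add: chi_inv)
  show "a \<otimes>\<^bsub>F\<^esub> b \<in> K" if "a \<in> K" "b \<in> K" for a b using that unfolding K_def by (simp add: chi_mult)
qed

definition Hs :: "('a \<Rightarrow> 'b) \<Rightarrow> 'b set" where "Hs \<phi> = \<phi> ` K"
definition Zs :: "('a \<Rightarrow> 'b) \<Rightarrow> 'b set" where "Zs \<phi> = {z \<in> Hs \<phi>. \<forall>h\<in>Hs \<phi>. z \<otimes> h = h \<otimes> z}"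
definition u :: "('a \<Rightarrow> 'b) \<Rightarrow> 'b \<Rightarrow> int \<Rightarrow> 'b" where
  "u \<phi> c n = inv (\<phi> t [^] n) \<otimes> (\<phi> t \<otimes> c) [^] n"
definition tau :: "('a \<Rightarrow> 'b) \<Rightarrow> 'b \<Rightarrow> 'a \<Rightarrow> 'b" where
  "tau \<phi> c x = \<phi> x \<otimes> u \<phi> c (chi x)"
definition tw :: "('a \<Rightarrow> 'b) \<Rightarrow> 'b \<Rightarrow> 'b \<Rightarrow> 'a \<Rightarrow> 'b" where
  "tw \<phi> r c = (\<lambda>x\<in>carrier F. r \<otimes> tau \<phi> c x \<otimes> inv r)"

lemma Hs_sub: "\<phi> \<in> hom F G \<Longrightarrow> Hs \<phi> \<subseteq> carrier G"
  unfolding Hs_def using K_sub by (auto simp: hom_in_carrier)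

lemma Hs_subgroup: "\<phi> \<in> hom F G \<Longrightarrow> subgroup (Hs \<phi>) G"
  unfolding Hs_def using group_hom.subgroup_img_is_subgroup[OF ghom K_subgroup] by blast

lemma g_in: "\<phi> \<in> hom F G \<Longrightarrow> \<phi> t \<in> carrier G"
  by (simp add: hom_in_carrier t_in)

lemma Hs_conjF:
  assumes \<phi>: "\<phi> \<in> hom F G" and h: "h \<in> Hs \<phi>" and x: "x \<in> carrier F"
  shows "\<phi> x \<otimes> h \<otimes> inv (\<phi> x) \<in> Hs \<phi>"
proof -
  interpret group_hom F G \<phi> by (rule ghom[OF \<phi>])
  obtain k where k: "k \<in> K" "h = \<phi> k" using h unfolding Hs_def by auto
  have kc: "k \<in> carrier F" using k K_sub by auto
  have "\<phi> x \<otimes> h \<otimes> inv (\<phi> x) = \<phi> (x \<otimes>\<^bsub>F\<^esub> k \<otimes>\<^bsub>F\<^esub> inv\<^bsub>F\<^esub> x)"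
    using k kc x by simp
  then show ?thesis using K_conj[OF k(1) x] unfolding Hs_def by auto
qed

lemma Hs_conj_t:
  assumes \<phi>: "\<phi> \<in> hom F G" and h: "h \<in> Hs \<phi>"
  shows "\<phi> t \<otimes> h \<otimes> inv (\<phi> t) \<in> Hs \<phi>" "inv (\<phi> t) \<otimes> h \<otimes> \<phi> t \<in> Hs \<phi>"
proof -
  interpret group_hom F G \<phi> by (rule ghom[OF \<phi>])
  show "\<phi> t \<otimes> h \<otimes> inv (\<phi> t) \<in> Hs \<phi>" using Hs_conjF[OF \<phi> h t_in] .
  have e: "\<phi> (inv\<^bsub>F\<^esub> t) = inv (\<phi> t)" using t_in by simp
  have "\<phi> (inv\<^bsub>F\<^esub> t) \<otimes> h \<otimes> inv (\<phi> (inv\<^bsub>F\<^esub> t)) \<in> Hs \<phi>"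
    using Hs_conjF[OF \<phi> h F.inv_closed[OF t_in]] .
  then show "inv (\<phi> t) \<otimes> h \<otimes> \<phi> t \<in> Hs \<phi>" unfolding e using g_in[OF \<phi>] by simp
qed

lemma u_comm:
  assumes \<phi>: "\<phi> \<in> hom F G" and c: "c \<in> carrier G" and cc: "\<And>h. h \<in> Hs \<phi> \<Longrightarrow> c \<otimes> h = h \<otimes> c"
    and h: "h \<in> Hs \<phi>"
  shows "u \<phi> c n \<otimes> h = h \<otimes> u \<phi> c n"
proof -
  let ?g = "\<phi> t"
  have g: "?g \<in> carrier G" using g_in[OF \<phi>] .
  have hc: "h \<in> carrier G" using h Hs_sub[OF \<phi>] by auto
  have cp: "(?g \<otimes> c) [^] n \<otimes> h \<otimes> inv ((?g \<otimes> c) [^] n) = ?g [^] n \<otimes> h \<otimes> inv (?g [^] n)"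
    using G.conj_pow[OF Hs_sub[OF \<phi>] g c Hs_conj_t(1)[OF \<phi>] Hs_conj_t(2)[OF \<phi>] cc] h by blast
  have gcp: "(?g \<otimes> c) [^] n \<in> carrier G" "?g [^] n \<in> carrier G" using g c by auto
  have "u \<phi> c n \<otimes> h = inv (?g [^] n) \<otimes> ((?g \<otimes> c) [^] n \<otimes> h \<otimes> inv ((?g \<otimes> c) [^] n)) \<otimes> (?g \<otimes> c) [^] n"
    unfolding u_def using gcp hc by (simp add: G.m_assoc)
  also have "\<dots> = inv (?g [^] n) \<otimes> (?g [^] n \<otimes> h \<otimes> inv (?g [^] n)) \<otimes> (?g \<otimes> c) [^] n"
    using cp by simp
  also have "\<dots> = h \<otimes> u \<phi> c n"
    unfolding u_def using gcp hc by (simp add: G.m_assoc)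
  finally show ?thesis .
qed

lemma u_closed: "\<phi> \<in> hom F G \<Longrightarrow> c \<in> carrier G \<Longrightarrow> u \<phi> c n \<in> carrier G"
  unfolding u_def using g_in by simp

lemma u_add:
  assumes \<phi>: "\<phi> \<in> hom F G" and c: "c \<in> carrier G"
  shows "u \<phi> c (n + m) = inv (\<phi> t [^] m) \<otimes> u \<phi> c n \<otimes> \<phi> t [^] m \<otimes> u \<phi> c m"
  unfolding u_def using g_in[OF \<phi>] c by (simp add: G.int_pow_mult G.gsimps)

lemma u_zero: "\<phi> \<in> hom F G \<Longrightarrow> c \<in> carrier G \<Longrightarrow> u \<phi> c 0 = \<one>"
  unfolding u_def by simp

lemma u_one: "\<phi> \<in> hom F G \<Longrightarrow> c \<in> carrier G \<Longrightarrow> u \<phi> c 1 = c"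
  unfolding u_def using g_in by (simp add: G.m_assoc[symmetric])

lemma tau_hom:
  assumes \<phi>: "\<phi> \<in> hom F G" and c: "c \<in> carrier G" and cc: "\<And>h. h \<in> Hs \<phi> \<Longrightarrow> c \<otimes> h = h \<otimes> c"
  shows "tau \<phi> c \<in> hom F G"
proof (rule homI)
  interpret group_hom F G \<phi> by (rule ghom[OF \<phi>])
  show "tau \<phi> c x \<in> carrier G" if "x \<in> carrier F" for x
    unfolding tau_def using that u_closed[OF \<phi> c] by simp
  fix x y assume x: "x \<in> carrier F" and y: "y \<in> carrier F"
  let ?g = "\<phi> t" let ?n = "chi x" let ?m = "chi y"
  have g: "?g \<in> carrier G" using g_in[OF \<phi>] .
  let ?h = "\<phi> y \<otimes> inv (?g [^] ?m)"
  have hH: "?h \<in> Hs \<phi>"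
  proof -
    have "?h = \<phi> (y \<otimes>\<^bsub>F\<^esub> inv\<^bsub>F\<^esub> (t [^]\<^bsub>F\<^esub> ?m))"
      using y t_in by (simp add: hom_int_pow)
    then show ?thesis using decomp_K[OF y] unfolding Hs_def by auto
  qed
  have hc: "?h \<in> carrier G" using y g by simp
  have un: "u \<phi> c ?n \<in> carrier G" "u \<phi> c ?m \<in> carrier G" using u_closed[OF \<phi> c] by auto
  have gm: "?g [^] ?m \<in> carrier G" using g by simp
  have "tau \<phi> c (x \<otimes>\<^bsub>F\<^esub> y) = \<phi> x \<otimes> \<phi> y \<otimes> u \<phi> c (?n + ?m)"
    unfolding tau_def using x y by (simp add: chi_mult)
  also have "\<dots> = \<phi> x \<otimes> (?h \<otimes> (u \<phi> c ?n \<otimes> (?g [^] ?m \<otimes> u \<phi> c ?m)))"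
    unfolding u_add[OF \<phi> c] using x y g hc gm un by (simp add: G.m_assoc)
  also have "\<dots> = \<phi> x \<otimes> (u \<phi> c ?n \<otimes> (?h \<otimes> (?g [^] ?m \<otimes> u \<phi> c ?m)))"
    using u_comm[OF \<phi> c cc hH, of ?n] x hc gm un by (simp add: G.m_assoc[symmetric])
  also have "\<dots> = tau \<phi> c x \<otimes> tau \<phi> c y"
    unfolding tau_def using x y g hc gm un by (simp add: G.m_assoc)
  finally show "tau \<phi> c (x \<otimes>\<^bsub>F\<^esub> y) = tau \<phi> c x \<otimes> tau \<phi> c y" .
qed

end

context twist begin

lemma tw_hom:
  assumes \<phi>: "\<phi> \<in> hom F G" and r: "r \<in> carrier G" and c: "c \<in> carrier G"
    and cc: "\<And>h. h \<in> Hs \<phi> \<Longrightarrow> c \<otimes> h = h \<otimes> c"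
  shows "tw \<phi> r c \<in> hom F G"
proof (rule homI)
  have th: "tau \<phi> c \<in> hom F G" by (rule tau_hom[OF \<phi> c cc])
  show "tw \<phi> r c x \<in> carrier G" if "x \<in> carrier F" for x
    unfolding tw_def using that r hom_in_carrier[OF th that] by simp
  fix x y assume x: "x \<in> carrier F" and y: "y \<in> carrier F"
  have tx: "tau \<phi> c x \<in> carrier G" "tau \<phi> c y \<in> carrier G"
    using hom_in_carrier[OF th] x y by auto
  have "tau \<phi> c (x \<otimes>\<^bsub>F\<^esub> y) = tau \<phi> c x \<otimes> tau \<phi> c y" using th x y by (simp add: hom_mult)
  then show "tw \<phi> r c (x \<otimes>\<^bsub>F\<^esub> y) = tw \<phi> r c x \<otimes> tw \<phi> r c y"
    unfolding tw_def using x y r tx by (simp add: G.m_assoc)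
qed

lemma tw_ext: "tw \<phi> r c \<in> extensional (carrier F)"
  unfolding tw_def by simp

lemma tw_K: "\<phi> \<in> hom F G \<Longrightarrow> c \<in> carrier G \<Longrightarrow> k \<in> K \<Longrightarrow> tw \<phi> r c k = r \<otimes> \<phi> k \<otimes> inv r"
  unfolding tw_def tau_def using K_sub
  by (auto simp: u_zero K_def hom_in_carrier)

lemma tw_t: "\<phi> \<in> hom F G \<Longrightarrow> c \<in> carrier G \<Longrightarrow> tw \<phi> r c t = r \<otimes> (\<phi> t \<otimes> c) \<otimes> inv r"
  unfolding tw_def tau_def using t_in by (simp add: chi_t u_one)

lemma epi_hom: "\<phi> \<in> epi F G \<Longrightarrow> \<phi> \<in> hom F G" by (simp add: epi_def)

lemma Hs_normal:
  assumes \<phi>: "\<phi> \<in> epi F G" and y: "y \<in> carrier G" and h: "h \<in> Hs \<phi>"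
  shows "y \<otimes> h \<otimes> inv y \<in> Hs \<phi>"
proof -
  obtain x where x: "x \<in> carrier F" "y = \<phi> x" using \<phi> y unfolding epi_def by auto
  show ?thesis using Hs_conjF[OF epi_hom[OF \<phi>] h x(1)] x(2) by simp
qed

lemma gen_form:
  assumes \<phi>: "\<phi> \<in> epi F G" and y: "y \<in> carrier G"
  shows "\<exists>h\<in>Hs \<phi>. \<exists>n::int. y = h \<otimes> \<phi> t [^] n"
proof -
  have ph: "\<phi> \<in> hom F G" using epi_hom[OF \<phi>] .
  interpret group_hom F G \<phi> by (rule ghom[OF ph])
  obtain x where x: "x \<in> carrier F" "y = \<phi> x" using \<phi> y unfolding epi_def by auto
  let ?h = "\<phi> (x \<otimes>\<^bsub>F\<^esub> inv\<^bsub>F\<^esub> (t [^]\<^bsub>F\<^esub> chi x))"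
  have "?h \<in> Hs \<phi>" using decomp_K[OF x(1)] unfolding Hs_def by auto
  moreover have "y = ?h \<otimes> \<phi> t [^] chi x"
    using x t_in by (simp add: hom_int_pow G.m_assoc)
  ultimately show ?thesis by blast
qed

lemma derived_sub:
  assumes \<phi>: "\<phi> \<in> epi F G"
  shows "derived G (carrier G) \<subseteq> Hs \<phi>"
  unfolding derived_def
proof (rule G.generate_subgroup_incl[OF _ Hs_subgroup[OF epi_hom[OF \<phi>]]])
  have ph: "\<phi> \<in> hom F G" using epi_hom[OF \<phi>] .
  interpret group_hom F G \<phi> by (rule ghom[OF ph])
  show "derived_set G (carrier G) \<subseteq> Hs \<phi>"
  proof clarify
    fix y1 y2 assume y: "y1 \<in> carrier G" "y2 \<in> carrier G"
    obtain x1 where x1: "x1 \<in> carrier F" "y1 = \<phi> x1" using \<phi> y unfolding epi_def by auto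
    obtain x2 where x2: "x2 \<in> carrier F" "y2 = \<phi> x2" using \<phi> y unfolding epi_def by auto
    let ?k = "x1 \<otimes>\<^bsub>F\<^esub> x2 \<otimes>\<^bsub>F\<^esub> inv\<^bsub>F\<^esub> x1 \<otimes>\<^bsub>F\<^esub> inv\<^bsub>F\<^esub> x2"
    have "?k \<in> K" unfolding K_def using x1 x2 by (simp add: chi_mult chi_inv)
    moreover have "y1 \<otimes> y2 \<otimes> inv y1 \<otimes> inv y2 = \<phi> ?k" using x1 x2 by simp
    ultimately show "y1 \<otimes> y2 \<otimes> inv y1 \<otimes> inv y2 \<in> Hs \<phi>" unfolding Hs_def by auto
  qed
qed

lemma Zs_sub: "Zs \<phi> \<subseteq> Hs \<phi>" unfolding Zs_def by auto

lemma Zs_comm: "c \<in> Zs \<phi> \<Longrightarrow> h \<in> Hs \<phi> \<Longrightarrow> c \<otimes> h = h \<otimes> c"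
  unfolding Zs_def by auto

lemma Zs_subgroup:
  assumes \<phi>: "\<phi> \<in> hom F G" shows "subgroup (Zs \<phi>) G"
proof (rule G.subgroupI)
  interpret H: subgroup "Hs \<phi>" G by (rule Hs_subgroup[OF \<phi>])
  show "Zs \<phi> \<subseteq> carrier G" using Zs_sub H.subset by (rule subset_trans)
  have "\<one> \<in> Zs \<phi>" unfolding Zs_def using H.one_closed H.subset by auto
  then show "Zs \<phi> \<noteq> {}" by auto
  show "inv a \<in> Zs \<phi>" if a: "a \<in> Zs \<phi>" for a
  proof -
    have ac: "a \<in> carrier G" "a \<in> Hs \<phi>" using a H.subset unfolding Zs_def by auto
    have "inv a \<otimes> h = h \<otimes> inv a" if h: "h \<in> Hs \<phi>" for h
    proof -
      have hc: "h \<in> carrier G" using h H.subset by auto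
      have "a \<otimes> h = h \<otimes> a" using Zs_comm[OF a h] .
      then have "inv a \<otimes> (a \<otimes> h) \<otimes> inv a = inv a \<otimes> (h \<otimes> a) \<otimes> inv a" by simp
      then show ?thesis using ac hc by (simp add: G.m_assoc)
    qed
    then show ?thesis unfolding Zs_def using ac by auto
  qed
  show "a \<otimes> b \<in> Zs \<phi>" if ab: "a \<in> Zs \<phi>" "b \<in> Zs \<phi>" for a b
  proof -
    have c: "a \<in> carrier G" "b \<in> carrier G" "a \<in> Hs \<phi>" "b \<in> Hs \<phi>"
      using ab H.subset unfolding Zs_def by auto
    have "a \<otimes> b \<otimes> h = h \<otimes> (a \<otimes> b)" if h: "h \<in> Hs \<phi>" for h
    proof -
      have hc: "h \<in> carrier G" using h H.subset by auto
      have ah: "a \<otimes> h = h \<otimes> a" using Zs_comm[OF ab(1) h] .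
      have bh: "b \<otimes> h = h \<otimes> b" using Zs_comm[OF ab(2) h] .
      have "a \<otimes> b \<otimes> h = a \<otimes> (b \<otimes> h)" using c hc by (simp add: G.m_assoc)
      also have "\<dots> = a \<otimes> (h \<otimes> b)" using bh by simp
      also have "\<dots> = (a \<otimes> h) \<otimes> b" using c hc by (simp add: G.m_assoc)
      also have "\<dots> = (h \<otimes> a) \<otimes> b" using ah by simp
      also have "\<dots> = h \<otimes> (a \<otimes> b)" using c hc by (simp add: G.m_assoc)
      finally show ?thesis .
    qed
    then show ?thesis unfolding Zs_def using c by auto
  qed
qed

lemma Zs_carrier: "\<phi> \<in> hom F G \<Longrightarrow> c \<in> Zs \<phi> \<Longrightarrow> c \<in> carrier G"
  using Zs_sub Hs_sub by blast

end

context twist begin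

lemma tw_epi:
  assumes \<phi>: "\<phi> \<in> epi F G" and r: "r \<in> carrier G" and c: "c \<in> Zs \<phi>"
  shows "tw \<phi> r c \<in> epi F G"
proof -
  have ph: "\<phi> \<in> hom F G" using epi_hom[OF \<phi>] .
  have cG: "c \<in> carrier G" using Zs_carrier[OF ph c] .
  have cc: "\<And>h. h \<in> Hs \<phi> \<Longrightarrow> c \<otimes> h = h \<otimes> c" using Zs_comm[OF c] .
  have th: "tau \<phi> c \<in> hom F G" using tau_hom[OF ph cG cc] .
  interpret T: group_hom F G "tau \<phi> c" by (rule ghom[OF th])
  interpret H: subgroup "Hs \<phi>" G by (rule Hs_subgroup[OF ph])
  let ?I = "tau \<phi> c ` carrier F"
  have I: "subgroup ?I G" by (rule T.img_is_subgroup)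
  have HI: "Hs \<phi> \<subseteq> ?I"
  proof
    fix h assume "h \<in> Hs \<phi>"
    then obtain k where k: "k \<in> K" "h = \<phi> k" unfolding Hs_def by auto
    have kc: "k \<in> carrier F" using k K_sub by auto
    have "tau \<phi> c k = h" unfolding tau_def using k kc ph cG
      by (simp add: K_def u_zero hom_in_carrier)
    then show "h \<in> ?I" using kc by force
  qed
  have gcI: "\<phi> t \<otimes> c \<in> ?I"
  proof -
    have "tau \<phi> c t = \<phi> t \<otimes> c" unfolding tau_def using ph cG by (simp add: chi_t u_one)
    then show ?thesis using t_in by force
  qed
  have cH: "c \<in> Hs \<phi>" using c Zs_sub by auto
  have gI: "\<phi> t \<in> ?I"
  proof -
    have "inv c \<in> ?I" using HI H.m_inv_closed[OF cH] by auto
    then have "(\<phi> t \<otimes> c) \<otimes> inv c \<in> ?I" using subgroup.m_closed[OF I gcI] by blast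
    then show ?thesis using g_in[OF ph] cG by (simp add: G.m_assoc)
  qed
  have allI: "y \<in> ?I" if y: "y \<in> carrier G" for y
  proof -
    obtain h n where hn: "h \<in> Hs \<phi>" "y = h \<otimes> \<phi> t [^] (n::int)" using gen_form[OF \<phi> y] by blast
    have "\<phi> t [^] n \<in> ?I" using G.subgroup_int_pow_closed[OF I gI] .
    then show ?thesis using hn HI subgroup.m_closed[OF I] by blast
  qed
  have "tw \<phi> r c \<in> hom F G" using tw_hom[OF ph r cG cc] .
  moreover have "tw \<phi> r c ` carrier F = carrier G"
  proof
    show "tw \<phi> r c ` carrier F \<subseteq> carrier G" using hom_carrier[OF calculation] .
    show "carrier G \<subseteq> tw \<phi> r c ` carrier F"
    proof
      fix y assume y: "y \<in> carrier G"
      have "inv r \<otimes> y \<otimes> r \<in> ?I" using allI y r by simp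
      then obtain x where x: "x \<in> carrier F" "tau \<phi> c x = inv r \<otimes> y \<otimes> r" by auto
      have "tw \<phi> r c x = y" unfolding tw_def using x y r by (simp add: G.m_assoc)
      then show "y \<in> tw \<phi> r c ` carrier F" using x by force
    qed
  qed
  ultimately show ?thesis unfolding epi_def by simp
qed

lemma Hs_tw:
  assumes \<phi>: "\<phi> \<in> epi F G" and r: "r \<in> carrier G" and c: "c \<in> Zs \<phi>"
  shows "Hs (tw \<phi> r c) = Hs \<phi>"
proof -
  have ph: "\<phi> \<in> hom F G" using epi_hom[OF \<phi>] .
  have cG: "c \<in> carrier G" using Zs_carrier[OF ph c] .
  show ?thesis
  proof
    show "Hs (tw \<phi> r c) \<subseteq> Hs \<phi>"
    proof
      fix h assume "h \<in> Hs (tw \<phi> r c)"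
      then obtain k where k: "k \<in> K" "h = tw \<phi> r c k" unfolding Hs_def by auto
      have "\<phi> k \<in> Hs \<phi>" using k unfolding Hs_def by auto
      then show "h \<in> Hs \<phi>" using k tw_K[OF ph cG] Hs_normal[OF \<phi> r] by simp
    qed
    show "Hs \<phi> \<subseteq> Hs (tw \<phi> r c)"
    proof
      fix h assume h: "h \<in> Hs \<phi>"
      have hc: "h \<in> carrier G" using h Hs_sub[OF ph] by auto
      have "inv r \<otimes> h \<otimes> inv (inv r) \<in> Hs \<phi>" using Hs_normal[OF \<phi> G.inv_closed[OF r] h] .
      then obtain k where k: "k \<in> K" "\<phi> k = inv r \<otimes> h \<otimes> r" unfolding Hs_def using r by auto
      have "tw \<phi> r c k = h" using tw_K[OF ph cG k(1)] k(2) r hc by (simp add: G.m_assoc)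
      then show "h \<in> Hs (tw \<phi> r c)" using k(1) unfolding Hs_def by force
    qed
  qed
qed

lemma Zs_tw:
  assumes "\<phi> \<in> epi F G" "r \<in> carrier G" "c \<in> Zs \<phi>"
  shows "Zs (tw \<phi> r c) = Zs \<phi>"
  unfolding Zs_def Hs_tw[OF assms] ..

lemma tw_comp:
  assumes \<phi>: "\<phi> \<in> epi F G" "\<phi> \<in> extensional (carrier F)"
    and r: "r \<in> Hs \<phi>" "r' \<in> Hs \<phi>" and c: "c \<in> Zs \<phi>" "c' \<in> Zs \<phi>"
  shows "tw (tw \<phi> r c) r' c' = tw \<phi> (r' \<otimes> r) (c \<otimes> c')"
proof -
  have ph: "\<phi> \<in> hom F G" using epi_hom[OF \<phi>(1)] .
  interpret H: subgroup "Hs \<phi>" G by (rule Hs_subgroup[OF ph])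
  interpret Z: subgroup "Zs \<phi>" G by (rule Zs_subgroup[OF ph])
  have rG: "r \<in> carrier G" "r' \<in> carrier G" using r H.subset by auto
  have cG: "c \<in> carrier G" "c' \<in> carrier G" using c Z.subset by auto
  have g: "\<phi> t \<in> carrier G" using g_in[OF ph] .
  have tw1: "tw \<phi> r c \<in> hom F G" using tw_hom[OF ph rG(1) cG(1) Zs_comm[OF c(1)]] .
  have HS: "Hs (tw \<phi> r c) = Hs \<phi>" using Hs_tw[OF \<phi>(1) rG(1) c(1)] .
  have tw2: "tw (tw \<phi> r c) r' c' \<in> hom F G"
    using tw_hom[OF tw1 rG(2) cG(2)] Zs_comm[OF c(2)] HS by simp
  have tw3: "tw \<phi> (r' \<otimes> r) (c \<otimes> c') \<in> hom F G"
    using tw_hom[OF ph _ _ Zs_comm[OF Z.m_closed[OF c]]] rG cG by simp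
  show ?thesis
  proof (rule hom_eqI[OF tw2 tw3 tw_ext tw_ext])
    fix k assume k: "k \<in> K"
    have pk: "\<phi> k \<in> carrier G" using k K_sub hom_in_carrier[OF ph] by auto
    show "tw (tw \<phi> r c) r' c' k = tw \<phi> (r' \<otimes> r) (c \<otimes> c') k"
      using tw_K[OF tw1 cG(2) k] tw_K[OF ph cG(1) k] tw_K[OF ph _ k, of "c \<otimes> c'" "r' \<otimes> r"] rG cG pk
      by (simp add: G.m_assoc G.inv_mult_group)
  next
    have rc: "inv r \<otimes> (c' \<otimes> w) = c' \<otimes> (inv r \<otimes> w)" if "w \<in> carrier G" for w
      using G.comm_move[OF G.inv_closed[OF rG(1)] cG(2) that] Zs_comm[OF c(2) H.m_inv_closed[OF r(1)]] by simp
    show "tw (tw \<phi> r c) r' c' t = tw \<phi> (r' \<otimes> r) (c \<otimes> c') t"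
      using tw_t[OF tw1 cG(2)] tw_t[OF ph cG(1)] tw_t[OF ph, of "c \<otimes> c'" "r' \<otimes> r"] rG cG g
      by (simp add: G.m_assoc G.inv_mult_group rc)
  qed
qed

lemma tw_id:
  assumes ph: "\<phi> \<in> hom F G" and e: "\<phi> \<in> extensional (carrier F)"
  shows "tw \<phi> \<one> \<one> = \<phi>"
proof (rule extensionalityI[OF tw_ext e])
  fix x assume x: "x \<in> carrier F"
  have "u \<phi> \<one> (chi x) = \<one>" unfolding u_def using g_in[OF ph] by simp
  then show "tw \<phi> \<one> \<one> x = \<phi> x" unfolding tw_def tau_def using x hom_in_carrier[OF ph x] by simp
qed

end

context twist begin

definition E where "E = surj_homs F G"
definition R where "R = {(\<phi>, \<psi>). \<phi> \<in> E \<and> (\<exists>r\<in>Hs \<phi>. \<exists>c\<in>Zs \<phi>. \<psi> = tw \<phi> r c)}"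

lemma E_D: "\<phi> \<in> E \<Longrightarrow> \<phi> \<in> epi F G \<and> \<phi> \<in> extensional (carrier F)"
  unfolding E_def surj_homs_def by auto

lemma Hs_carrier: "\<phi> \<in> E \<Longrightarrow> r \<in> Hs \<phi> \<Longrightarrow> r \<in> carrier G"
  using E_D Hs_sub epi_hom by blast

lemma tw_E:
  assumes \<phi>: "\<phi> \<in> E" and r: "r \<in> Hs \<phi>" and c: "c \<in> Zs \<phi>"
  shows "tw \<phi> r c \<in> E"
proof -
  have ep: "\<phi> \<in> epi F G" using E_D[OF \<phi>] by blast
  have rG: "r \<in> carrier G" using Hs_carrier[OF \<phi> r] .
  show ?thesis unfolding E_def surj_homs_def using tw_epi[OF ep rG c] tw_ext by simp
qed

lemma R_equiv: "equiv E R"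
proof (rule equivI)
  show "R \<subseteq> E \<times> E"
  proof
    fix p assume "p \<in> R"
    then obtain \<phi> r c where "p = (\<phi>, tw \<phi> r c)" "\<phi> \<in> E" "r \<in> Hs \<phi>" "c \<in> Zs \<phi>"
      unfolding R_def by blast
    then show "p \<in> E \<times> E" using tw_E by simp
  qed
  show "refl_on E R"
  proof (rule refl_onI)
    fix \<phi> assume \<phi>: "\<phi> \<in> E"
    have ph: "\<phi> \<in> hom F G" using E_D[OF \<phi>] epi_hom by blast
    interpret H: subgroup "Hs \<phi>" G by (rule Hs_subgroup[OF ph])
    interpret Z: subgroup "Zs \<phi>" G by (rule Zs_subgroup[OF ph])
    have "tw \<phi> \<one> \<one> = \<phi>" using tw_id[OF ph] E_D[OF \<phi>] by blast
    then have "\<phi> \<in> E \<and> (\<exists>r\<in>Hs \<phi>. \<exists>c\<in>Zs \<phi>. \<phi> = tw \<phi> r c)"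
      using \<phi> H.one_closed Z.one_closed by (intro conjI bexI[of _ "\<one>"]) auto
    then show "(\<phi>, \<phi>) \<in> R" unfolding R_def by simp
  qed
  show "sym R"
  proof (rule symI)
    fix \<phi> \<psi> assume "(\<phi>, \<psi>) \<in> R"
    then obtain r c where \<phi>: "\<phi> \<in> E" and rc: "r \<in> Hs \<phi>" "c \<in> Zs \<phi>" and \<psi>: "\<psi> = tw \<phi> r c"
      unfolding R_def by auto
    have ph: "\<phi> \<in> hom F G" using E_D[OF \<phi>] epi_hom by blast
    interpret H: subgroup "Hs \<phi>" G by (rule Hs_subgroup[OF ph])
    interpret Z: subgroup "Zs \<phi>" G by (rule Zs_subgroup[OF ph])
    have rG: "r \<in> carrier G" "c \<in> carrier G" using rc H.subset Z.subset by auto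
    have HS: "Hs \<psi> = Hs \<phi>" "Zs \<psi> = Zs \<phi>"
      using Hs_tw[OF _ rG(1) rc(2)] Zs_tw[OF _ rG(1) rc(2)] E_D[OF \<phi>] \<psi> by auto
    have "tw \<psi> (inv r) (inv c) = tw \<phi> (inv r \<otimes> r) (c \<otimes> inv c)"
      unfolding \<psi> using tw_comp[of \<phi> r "inv r" c "inv c"] E_D[OF \<phi>] rc H.m_inv_closed Z.m_inv_closed by blast
    also have "\<dots> = \<phi>" using rG tw_id[OF ph] E_D[OF \<phi>] by simp
    finally have "\<phi> = tw \<psi> (inv r) (inv c)" ..
    then have "\<psi> \<in> E \<and> (\<exists>r\<in>Hs \<psi>. \<exists>c\<in>Zs \<psi>. \<phi> = tw \<psi> r c)"
      using tw_E[OF \<phi> rc] \<psi> HS H.m_inv_closed[OF rc(1)] Z.m_inv_closed[OF rc(2)]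
      by (intro conjI bexI[of _ "inv r"] bexI[of _ "inv c"]) auto
    then show "(\<psi>, \<phi>) \<in> R" unfolding R_def by simp
  qed
  show "trans R"
  proof (rule transI)
    fix \<phi> \<psi> \<chi> assume "(\<phi>, \<psi>) \<in> R" "(\<psi>, \<chi>) \<in> R"
    then obtain r c r' c' where \<phi>: "\<phi> \<in> E" and rc: "r \<in> Hs \<phi>" "c \<in> Zs \<phi>" and \<psi>: "\<psi> = tw \<phi> r c"
       and rc': "r' \<in> Hs \<psi>" "c' \<in> Zs \<psi>" and \<chi>: "\<chi> = tw \<psi> r' c'"
      unfolding R_def by auto
    have ph: "\<phi> \<in> hom F G" using E_D[OF \<phi>] epi_hom by blast
    interpret H: subgroup "Hs \<phi>" G by (rule Hs_subgroup[OF ph])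
    interpret Z: subgroup "Zs \<phi>" G by (rule Zs_subgroup[OF ph])
    have rG: "r \<in> carrier G" using rc H.subset by auto
    have HS: "Hs \<psi> = Hs \<phi>" "Zs \<psi> = Zs \<phi>"
      using Hs_tw[OF _ rG(1) rc(2)] Zs_tw[OF _ rG(1) rc(2)] E_D[OF \<phi>] \<psi> by auto
    have "\<chi> = tw \<phi> (r' \<otimes> r) (c \<otimes> c')"
      unfolding \<chi> \<psi> using tw_comp[of \<phi> r r' c c'] E_D[OF \<phi>] rc rc' HS by auto
    then have "\<phi> \<in> E \<and> (\<exists>r\<in>Hs \<phi>. \<exists>c\<in>Zs \<phi>. \<chi> = tw \<phi> r c)"
      using \<phi> H.m_closed rc rc' HS Z.m_closed
      by (intro conjI bexI[of _ "r' \<otimes> r"] bexI[of _ "c \<otimes> c'"]) auto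
    then show "(\<phi>, \<chi>) \<in> R" unfolding R_def by simp
  qed
qed

end

context twist begin

lemma class_eq: "\<phi> \<in> E \<Longrightarrow> R``{\<phi>} = {tw \<phi> r c | r c. r \<in> Hs \<phi> \<and> c \<in> Zs \<phi>}"
  unfolding R_def by auto

lemma class_eqpoll:
  assumes \<phi>: "\<phi> \<in> E"
  shows "\<exists>Y::'b set. R``{\<phi>} \<approx> derived G (carrier G) \<times> Y"
proof -
  have ep: "\<phi> \<in> epi F G" and ex: "\<phi> \<in> extensional (carrier F)" using E_D[OF \<phi>] by auto
  have ph: "\<phi> \<in> hom F G" using epi_hom[OF ep] .
  interpret H: subgroup "Hs \<phi>" G by (rule Hs_subgroup[OF ph])
  interpret Z: subgroup "Zs \<phi>" G by (rule Zs_subgroup[OF ph])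
  have g: "\<phi> t \<in> carrier G" using g_in[OF ph] .
  obtain T where T: "T \<subseteq> Hs \<phi>" and bT: "bij_betw (\<lambda>(r,z). r \<otimes> z) (T \<times> Zs \<phi>) (Hs \<phi>)"
    using G.transversal[OF Hs_subgroup[OF ph] Zs_subgroup[OF ph] Zs_sub] by blast
  have bij: "bij_betw (\<lambda>(r,c). tw \<phi> r c) (T \<times> Zs \<phi>) (R``{\<phi>})"
    unfolding bij_betw_def
  proof
    show "inj_on (\<lambda>(r,c). tw \<phi> r c) (T \<times> Zs \<phi>)"
    proof (rule inj_onI)
      fix p q assume p: "p \<in> T \<times> Zs \<phi>" and q: "q \<in> T \<times> Zs \<phi>"
        and e: "(\<lambda>(r,c). tw \<phi> r c) p = (\<lambda>(r,c). tw \<phi> r c) q"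
      obtain r c where pr: "p = (r, c)" "r \<in> T" "c \<in> Zs \<phi>" using p by auto
      obtain r' c' where qr: "q = (r', c')" "r' \<in> T" "c' \<in> Zs \<phi>" using q by auto
      have e': "tw \<phi> r c = tw \<phi> r' c'" using e pr qr by simp
      have rG: "r \<in> carrier G" "r' \<in> carrier G" using pr qr T H.subset by auto
      have cG: "c \<in> carrier G" "c' \<in> carrier G" using pr qr Z.subset by auto
      let ?w = "inv r' \<otimes> r"
      have wH: "?w \<in> Hs \<phi>" using pr qr T by auto
      have wc: "?w \<otimes> h = h \<otimes> ?w" if h: "h \<in> Hs \<phi>" for h
      proof -
        obtain k where k: "k \<in> K" "h = \<phi> k" using h unfolding Hs_def by auto
        have hc: "h \<in> carrier G" using h H.subset by auto
        have "r \<otimes> h \<otimes> inv r = r' \<otimes> h \<otimes> inv r'"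
          using tw_K[OF ph cG(1) k(1), of r] tw_K[OF ph cG(2) k(1), of r'] e' k(2) by simp
        then have "inv r' \<otimes> (r \<otimes> h \<otimes> inv r) \<otimes> r = inv r' \<otimes> (r' \<otimes> h \<otimes> inv r') \<otimes> r" by simp
        then show ?thesis using rG hc by (simp add: G.m_assoc)
      qed
      have wZ: "?w \<in> Zs \<phi>" unfolding Zs_def using wH wc by auto
      have "(\<lambda>(r,z). r \<otimes> z) (r, \<one>) = (\<lambda>(r,z). r \<otimes> z) (r', ?w)" using rG by (simp add: G.m_assoc[symmetric])
      moreover have "(r, \<one>) \<in> T \<times> Zs \<phi>" "(r', ?w) \<in> T \<times> Zs \<phi>" using pr qr wZ Z.one_closed by auto
      ultimately have "(r, \<one>) = (r', ?w)" using bT unfolding bij_betw_def inj_on_def by blast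
      then have rr: "r = r'" by simp
      have "tw \<phi> r c t = tw \<phi> r c' t" using e' rr by simp
      then have "r \<otimes> (\<phi> t \<otimes> c) \<otimes> inv r = r \<otimes> (\<phi> t \<otimes> c') \<otimes> inv r"
        using tw_t[OF ph cG(1)] tw_t[OF ph cG(2)] by simp
      then have "c = c'" using rG cG g by (simp add: G.m_assoc)
      then show "p = q" using pr qr rr by simp
    qed
    show "(\<lambda>(r,c). tw \<phi> r c) ` (T \<times> Zs \<phi>) = R``{\<phi>}"
    proof
      show "(\<lambda>(r,c). tw \<phi> r c) ` (T \<times> Zs \<phi>) \<subseteq> R``{\<phi>}"
        unfolding class_eq[OF \<phi>] using T by auto
      show "R``{\<phi>} \<subseteq> (\<lambda>(r,c). tw \<phi> r c) ` (T \<times> Zs \<phi>)"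
      proof
        fix \<psi> assume "\<psi> \<in> R``{\<phi>}"
        then obtain r c where rc: "\<psi> = tw \<phi> r c" "r \<in> Hs \<phi>" "c \<in> Zs \<phi>"
          unfolding class_eq[OF \<phi>] by auto
        have "r \<in> (\<lambda>(r,z). r \<otimes> z) ` (T \<times> Zs \<phi>)" using bT rc(2) unfolding bij_betw_def by simp
        then obtain r0 z where rz: "r0 \<in> T" "z \<in> Zs \<phi>" "r = r0 \<otimes> z" by auto
        have r0G: "r0 \<in> carrier G" using rz T H.subset by auto
        have zG: "z \<in> carrier G" "c \<in> carrier G" using rz rc Z.subset by auto
        let ?w1 = "inv (\<phi> t) \<otimes> z \<otimes> \<phi> t"
        have w1H: "?w1 \<in> Hs \<phi>" using Hs_conj_t(2)[OF ph] rz(2) Zs_sub by auto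
        have w1c: "?w1 \<otimes> h = h \<otimes> ?w1" if h: "h \<in> Hs \<phi>" for h
        proof -
          have hc: "h \<in> carrier G" using h H.subset by auto
          have h2: "\<phi> t \<otimes> h \<otimes> inv (\<phi> t) \<in> Hs \<phi>" using Hs_conj_t(1)[OF ph h] .
          have zc: "z \<otimes> (\<phi> t \<otimes> h \<otimes> inv (\<phi> t)) = (\<phi> t \<otimes> h \<otimes> inv (\<phi> t)) \<otimes> z"
            using Zs_comm[OF rz(2) h2] .
          have "?w1 \<otimes> h = inv (\<phi> t) \<otimes> (z \<otimes> (\<phi> t \<otimes> h \<otimes> inv (\<phi> t))) \<otimes> \<phi> t"
            using g zG hc by (simp add: G.m_assoc)
          also have "\<dots> = inv (\<phi> t) \<otimes> ((\<phi> t \<otimes> h \<otimes> inv (\<phi> t)) \<otimes> z) \<otimes> \<phi> t" using zc by simp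
          also have "\<dots> = h \<otimes> ?w1" using g zG hc by (simp add: G.m_assoc)
          finally show ?thesis .
        qed
        have w1Z: "?w1 \<in> Zs \<phi>" unfolding Zs_def using w1H w1c by auto
        let ?c = "?w1 \<otimes> c \<otimes> inv z"
        have cZ: "?c \<in> Zs \<phi>" using w1Z rc(3) rz(2) Z.m_closed Z.m_inv_closed by auto
        have cG: "?c \<in> carrier G" using cZ Z.subset by auto
        have "tw \<phi> r c = tw \<phi> r0 ?c"
        proof (rule hom_eqI[OF tw_hom[OF ph _ zG(2) Zs_comm[OF rc(3)]] tw_hom[OF ph r0G cG Zs_comm[OF cZ]] tw_ext tw_ext])
          show "r \<in> carrier G" using rc(2) H.subset by auto
          fix k assume k: "k \<in> K"
          have pk: "\<phi> k \<in> Hs \<phi>" using k unfolding Hs_def by auto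
          have pkc: "\<phi> k \<in> carrier G" using pk H.subset by auto
          have zk: "z \<otimes> \<phi> k = \<phi> k \<otimes> z" using Zs_comm[OF rz(2) pk] .
          have "tw \<phi> r c k = r0 \<otimes> (z \<otimes> \<phi> k) \<otimes> inv z \<otimes> inv r0"
            using tw_K[OF ph zG(2) k, of r] rz r0G zG pkc by (simp add: G.m_assoc G.inv_mult_group)
          also have "\<dots> = r0 \<otimes> \<phi> k \<otimes> inv r0" using zk r0G zG pkc by (simp add: G.m_assoc)
          also have "\<dots> = tw \<phi> r0 ?c k" using tw_K[OF ph cG k, of r0] by simp
          finally show "tw \<phi> r c k = tw \<phi> r0 ?c k" .
        next
          show "tw \<phi> r c t = tw \<phi> r0 ?c t"
            using tw_t[OF ph zG(2), of r] tw_t[OF ph cG, of r0] rz r0G zG g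
            by (simp add: G.m_assoc G.inv_mult_group)
        qed
        then show "\<psi> \<in> (\<lambda>(r,c). tw \<phi> r c) ` (T \<times> Zs \<phi>)" using rc(1) rz(1) cZ by force
      qed
    qed
  qed
  have subD: "subgroup (derived G (carrier G)) G" using G.derived_is_subgroup by simp
  obtain T' where T': "T' \<subseteq> Hs \<phi>" and bT': "bij_betw (\<lambda>(r,z). r \<otimes> z) (T' \<times> derived G (carrier G)) (Hs \<phi>)"
    using G.transversal[OF Hs_subgroup[OF ph] subD derived_sub[OF ep]] by blast
  have "R``{\<phi>} \<approx> T \<times> Zs \<phi>" using bij eqpoll_def eqpoll_sym by blast
  also have "T \<times> Zs \<phi> \<approx> Hs \<phi>" using bT eqpoll_def by blast
  also have "Hs \<phi> \<approx> T' \<times> derived G (carrier G)" using bT' eqpoll_def eqpoll_sym by blast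
  also have "T' \<times> derived G (carrier G) \<approx> derived G (carrier G) \<times> T'" by (rule times_commute_eqpoll)
  finally show ?thesis by blast
qed

theorem partB: "card_dvd (derived G (carrier G)) (surj_homs F G)"
proof -
  have "\<exists>Y::(('a \<Rightarrow> 'b) set \<times> 'b) set. E \<approx> derived G (carrier G) \<times> Y"
  proof (rule partition_eqpoll[OF R_equiv])
    fix Q assume "Q \<in> E // R"
    then obtain \<phi> where "\<phi> \<in> E" "Q = R``{\<phi>}" by (auto elim: quotientE)
    then show "\<exists>Y::'b set. Q \<approx> derived G (carrier G) \<times> Y" using class_eqpoll by blast
  qed
  then obtain Y :: "(('a \<Rightarrow> 'b) set \<times> 'b) set" where "E \<approx> derived G (carrier G) \<times> Y" by blast
  moreover have "derived G (carrier G) \<noteq> {}" unfolding derived_def using generate.one by blast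
  ultimately show ?thesis using card_dvd_from unfolding E_def by blast
qed

end

lemma (in group) addhom_basic:
  fixes f :: "'a \<Rightarrow> 'r::comm_ring_1"
  assumes B: "subgroup B G" and f: "\<And>x y. x \<in> B \<Longrightarrow> y \<in> B \<Longrightarrow> f (x \<otimes> y) = f x + f y"
  shows "f \<one> = 0" and "\<And>x. x \<in> B \<Longrightarrow> f (inv x) = - f x"
    and "\<And>x n. x \<in> B \<Longrightarrow> f (x [^] (n::int)) = of_int n * f x"
proof -
  interpret B: subgroup B G by (rule B)
  show f1: "f \<one> = 0" using f[OF B.one_closed B.one_closed] by simp
  show finv: "f (inv x) = - f x" if x: "x \<in> B" for x
  proof -
    have "f (x \<otimes> inv x) = f x + f (inv x)" using f[OF x B.m_inv_closed[OF x]] .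
    then have "0 = f x + f (inv x)" using x f1 B.subset by auto
    then show ?thesis by (simp add: eq_neg_iff_add_eq_0 add.commute)
  qed
  have pB: "x [^] (n::nat) \<in> B" if x: "x \<in> B" for x n
    using subgroup_int_pow_closed[OF B x, of "int n"] by (simp add: int_pow_int)
  have fnat: "f (x [^] (n::nat)) = of_nat n * f x" if x: "x \<in> B" for x n
  proof (induction n)
    case 0 then show ?case using f1 by simp
  next
    case (Suc n)
    have "x [^] n \<in> B" using pB[OF x] .
    then have "f (x [^] Suc n) = f (x [^] n) + f x" using f[of "x [^] n" x] x B.subset by auto
    then show ?case using Suc by (simp add: algebra_simps)
  qed
  show "f (x [^] (n::int)) = of_int n * f x" if x: "x \<in> B" for x n
  proof (cases "n < 0")
    case True
    then obtain m where m: "n = - int m" by (metis int_cases2 less_irrefl neg_int_cases)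
    have xc: "x \<in> carrier G" using x B.subset by auto
    have "x [^] n = inv (x [^] m)" using m xc by (simp add: int_pow_neg_int)
    then show ?thesis using finv[OF pB[OF x]] fnat[OF x] m by simp
  next
    case False
    then obtain m where m: "n = int m" by (metis nonneg_int_cases not_less)
    then show ?thesis using fnat[OF x] by (simp add: int_pow_int)
  qed
qed

context group begin

abbreviation "DD \<equiv> derived G (carrier G)"

lemma DD_subgroup: "subgroup DD G"
  using derived_is_subgroup by simp

lemma comm_in_DD: "x \<in> carrier G \<Longrightarrow> y \<in> carrier G \<Longrightarrow> x \<otimes> y \<otimes> inv x \<otimes> inv y \<in> DD"
  unfolding derived_def by (rule generate.incl) blast

lemma conjB:
  assumes B: "subgroup B G" and DB: "DD \<subseteq> B" and x: "x \<in> carrier G" and b: "b \<in> B"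
  shows "x \<otimes> b \<otimes> inv x \<in> B"
proof -
  interpret B: subgroup B G by (rule B)
  have bc: "b \<in> carrier G" using b B.subset by auto
  have e: "x \<otimes> b \<otimes> inv x = (x \<otimes> b \<otimes> inv x \<otimes> inv b) \<otimes> b" using x bc by (simp add: m_assoc)
  have "x \<otimes> b \<otimes> inv x \<otimes> inv b \<in> B" using comm_in_DD[OF x bc] DB by auto
  then have "(x \<otimes> b \<otimes> inv x \<otimes> inv b) \<otimes> b \<in> B" using b by (rule B.m_closed)
  then show ?thesis using e by simp
qed

definition Bset :: "'a set \<Rightarrow> 'a set" where "Bset T = generate G (DD \<union> T)"

lemma Bset_subgroup: "T \<subseteq> carrier G \<Longrightarrow> subgroup (Bset T) G"
  unfolding Bset_def by (rule generate_is_subgroup) (use derived_in_carrier[of "carrier G"] in auto)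

lemma DD_Bset: "DD \<subseteq> Bset T"
  unfolding Bset_def using generate.incl[of _ "DD \<union> T" G] by blast

lemma Bset_empty: "Bset {} = DD"
proof
  show "Bset {} \<subseteq> DD" unfolding Bset_def using generate_subgroup_incl[OF _ DD_subgroup] by simp
  show "DD \<subseteq> Bset {}" by (rule DD_Bset)
qed

lemma Mmem: "b \<in> Bset T \<Longrightarrow> x = b \<otimes> a [^] (k::int) \<Longrightarrow> x \<in> {b \<otimes> a [^] (k::int) | b k. b \<in> Bset T}"
  by blast

lemma gen_insert:
  assumes T: "T \<subseteq> carrier G" and a: "a \<in> carrier G"
  shows "Bset (insert a T) = {b \<otimes> a [^] (k::int) | b k. b \<in> Bset T}"
proof
  interpret B: subgroup "Bset T" G by (rule Bset_subgroup[OF T])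
  interpret B': subgroup "Bset (insert a T)" G by (rule Bset_subgroup) (use T a in auto)
  show "{b \<otimes> a [^] (k::int) | b k. b \<in> Bset T} \<subseteq> Bset (insert a T)"
  proof clarify
    fix b and k :: int assume b: "b \<in> Bset T"
    have "b \<in> Bset (insert a T)" using b mono_generate[of "DD \<union> T" "DD \<union> insert a T"] unfolding Bset_def by blast
    moreover have "a \<in> Bset (insert a T)" unfolding Bset_def by (rule generate.incl) simp
    then have "a [^] k \<in> Bset (insert a T)" by (rule subgroup_int_pow_closed[OF B'.subgroup_axioms])
    ultimately show "b \<otimes> a [^] k \<in> Bset (insert a T)" by (rule B'.m_closed)
  qed
  let ?M = "{b \<otimes> a [^] (k::int) | b k. b \<in> Bset T}"
  have Msub: "subgroup ?M G"
  proof (rule subgroupI)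
    show "?M \<subseteq> carrier G"
    proof
      fix x assume "x \<in> ?M"
      then obtain b and k :: int where "x = b \<otimes> a [^] k" "b \<in> Bset T" by blast
      then show "x \<in> carrier G" using B.subset a by auto
    qed
    have "\<one> = \<one> \<otimes> a [^] (0::int)" by simp
    then have "\<one> \<in> ?M" by (rule Mmem[OF B.one_closed])
    then show "?M \<noteq> {}" by blast
    show "inv x \<in> ?M" if xM: "x \<in> ?M" for x
    proof -
      obtain b and k :: int where bk: "x = b \<otimes> a [^] k" "b \<in> Bset T" using xM by blast
      have bc: "b \<in> carrier G" using bk B.subset by auto
      have c: "a [^] (- k) \<otimes> inv b \<otimes> inv (a [^] (-k)) \<in> Bset T"
        using conjB[OF B.subgroup_axioms DD_Bset _ B.m_inv_closed[OF bk(2)]] a by simp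
      have "inv x = (a [^] (- k) \<otimes> inv b \<otimes> inv (a [^] (-k))) \<otimes> a [^] (- k)"
        using bk bc a by (simp add: inv_mult_group m_assoc int_pow_neg)
      then show ?thesis using Mmem[OF c] by blast
    qed
    show "x \<otimes> y \<in> ?M" if xM: "x \<in> ?M" "y \<in> ?M" for x y
    proof -
      obtain b and k :: int where bk: "x = b \<otimes> a [^] k" "b \<in> Bset T" using xM by blast
      obtain b' and m :: int where bm: "y = b' \<otimes> a [^] m" "b' \<in> Bset T" using xM by blast
      have bc: "b \<in> carrier G" "b' \<in> carrier G" using bk bm B.subset by auto
      have c: "a [^] k \<otimes> b' \<otimes> inv (a [^] k) \<in> Bset T"
        using conjB[OF B.subgroup_axioms DD_Bset _ bm(2)] a by simp
      have "x \<otimes> y = (b \<otimes> (a [^] k \<otimes> b' \<otimes> inv (a [^] k))) \<otimes> a [^] (k + m)"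
        using bk bm bc a by (simp add: m_assoc int_pow_mult)
      then show ?thesis using Mmem[OF B.m_closed[OF bk(2) c]] by blast
    qed
  qed
  show "Bset (insert a T) \<subseteq> ?M"
    unfolding Bset_def[of "insert a T"]
  proof (rule generate_subgroup_incl[OF _ Msub])
    show "DD \<union> insert a T \<subseteq> ?M"
    proof
      fix x assume x: "x \<in> DD \<union> insert a T"
      show "x \<in> ?M"
      proof (cases "x = a")
        case True
        have "a = \<one> \<otimes> a [^] (1::int)" using a by simp
        then show ?thesis using True Mmem[OF B.one_closed] by blast
      next
        case False
        then have "x \<in> DD \<union> T" using x by simp
        then have xB: "x \<in> Bset T" unfolding Bset_def by (rule generate.incl)
        have "x = x \<otimes> a [^] (0::int)" using xB B.subset by auto
        then show ?thesis using Mmem[OF xB] by blast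
      qed
    qed
  qed
qed

end

context group begin

definition FI :: "'a set \<Rightarrow> bool" where
  "FI T \<longleftrightarrow> (\<exists>R. finite R \<and> R \<subseteq> carrier G \<and> (\<forall>x\<in>Bset T. \<exists>r\<in>R. \<exists>d\<in>DD. x = d \<otimes> r))"

definition HM :: "'a set \<Rightarrow> bool" where
  "HM T \<longleftrightarrow> (\<exists>f::'a \<Rightarrow> rat. (\<forall>x\<in>Bset T. \<forall>y\<in>Bset T. f (x \<otimes> y) = f x + f y)
      \<and> (\<forall>d\<in>DD. f d = 0) \<and> (\<exists>x\<in>Bset T. f x \<noteq> 0))"

lemma ins_decomp:
  assumes "T \<subseteq> carrier G" "a \<in> carrier G" "x \<in> Bset (insert a T)"
  obtains b and k :: int where "b \<in> Bset T" "x = b \<otimes> a [^] k"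
  using assms gen_insert[OF assms(1,2)] by blast

lemma ins_mem:
  assumes "T \<subseteq> carrier G" "a \<in> carrier G" "b \<in> Bset T"
  shows "b \<otimes> a [^] (k::int) \<in> Bset (insert a T)"
  using gen_insert[OF assms(1,2)] assms(3) by blast

lemma ins_prod:
  assumes T: "T \<subseteq> carrier G" and a: "a \<in> carrier G" and b: "b \<in> Bset T" "b' \<in> Bset T"
  shows "(b \<otimes> a [^] (k::int)) \<otimes> (b' \<otimes> a [^] (m::int)) = (b \<otimes> (a [^] k \<otimes> b' \<otimes> inv (a [^] k))) \<otimes> a [^] (k + m)"
    and "a [^] k \<otimes> b' \<otimes> inv (a [^] k) \<in> Bset T"
proof -
  interpret B: subgroup "Bset T" G by (rule Bset_subgroup[OF T])
  have bc: "b \<in> carrier G" "b' \<in> carrier G" using b B.subset by auto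
  show "(b \<otimes> a [^] k) \<otimes> (b' \<otimes> a [^] m) = (b \<otimes> (a [^] k \<otimes> b' \<otimes> inv (a [^] k))) \<otimes> a [^] (k + m)"
    using bc a by (simp add: m_assoc int_pow_mult)
  show "a [^] k \<otimes> b' \<otimes> inv (a [^] k) \<in> Bset T"
    using conjB[OF B.subgroup_axioms DD_Bset _ b(2)] a by simp
qed

lemma step_FI_pow:
  assumes T: "T \<subseteq> carrier G" and a: "a \<in> carrier G" and fi: "FI T"
    and m: "m > (0::nat)" "a [^] m \<in> Bset T"
  shows "FI (insert a T)"
proof -
  interpret B: subgroup "Bset T" G by (rule Bset_subgroup[OF T])
  obtain R where R: "finite R" "R \<subseteq> carrier G" "\<And>x. x \<in> Bset T \<Longrightarrow> \<exists>r\<in>R. \<exists>d\<in>DD. x = d \<otimes> r"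
    using fi unfolding FI_def by blast
  define R' where "R' = (\<lambda>(r,j). r \<otimes> a [^] (j::nat)) ` (R \<times> {..<m})"
  have "finite R'" unfolding R'_def using R(1) by simp
  moreover have "R' \<subseteq> carrier G" unfolding R'_def using R(2) a by auto
  moreover have "\<exists>r\<in>R'. \<exists>d\<in>DD. x = d \<otimes> r" if x: "x \<in> Bset (insert a T)" for x
  proof -
    obtain b and k :: int where bk: "b \<in> Bset T" "x = b \<otimes> a [^] k" using ins_decomp[OF T a x] by blast
    define q where "q = k div int m"
    define j where "j = k mod int m"
    have j: "0 \<le> j" "j < int m" using m(1) unfolding j_def by auto
    have kqj: "k = int m * q + j" unfolding q_def j_def by simp
    have am: "a [^] (int m) \<in> Bset T" using m(2) by (simp add: int_pow_int)
    have amq: "(a [^] (int m)) [^] q \<in> Bset T" using subgroup_int_pow_closed[OF B.subgroup_axioms am] .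
    have "a [^] k = (a [^] (int m)) [^] q \<otimes> a [^] j"
      using a by (simp add: kqj int_pow_mult int_pow_pow)
    then have "x = (b \<otimes> (a [^] (int m)) [^] q) \<otimes> a [^] j" using bk a B.subset by (simp add: m_assoc)
    moreover have "b \<otimes> (a [^] (int m)) [^] q \<in> Bset T" using B.m_closed[OF bk(1) amq] .
    then obtain r d where rd: "r \<in> R" "d \<in> DD" "b \<otimes> (a [^] (int m)) [^] q = d \<otimes> r" using R(3) by blast
    moreover have dc: "d \<in> carrier G" "r \<in> carrier G" using rd R(2) derived_in_carrier[of "carrier G"] by auto
    ultimately have "x = d \<otimes> (r \<otimes> a [^] nat j)"
      using j a by (simp add: m_assoc pow_nat)
    moreover have "r \<otimes> a [^] nat j \<in> R'" unfolding R'_def using rd(1) j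
      by (intro image_eqI[of _ _ "(r, nat j)"]) auto
    ultimately show ?thesis using rd(2) by blast
  qed
  ultimately show ?thesis unfolding FI_def by blast
qed

lemma pow_in_zero:
  assumes T: "T \<subseteq> carrier G" and a: "a \<in> carrier G"
    and nm: "\<forall>m::nat. m > 0 \<longrightarrow> a [^] m \<notin> Bset T" and k: "a [^] (k::int) \<in> Bset T"
  shows "k = 0"
proof (rule ccontr)
  interpret B: subgroup "Bset T" G by (rule Bset_subgroup[OF T])
  assume k0: "k \<noteq> 0"
  show False
  proof (cases "k > 0")
    case True
    have "a [^] nat k \<in> Bset T" using k True by (simp add: pow_nat)
    moreover have "a [^] nat k \<notin> Bset T" using nm[rule_format, of "nat k"] True by simp
    ultimately show False by blast
  next
    case False
    then have kneg: "- k > 0" using k0 by auto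
    have e: "inv (a [^] k) = a [^] (- k)" using int_pow_neg[OF a, of k] by simp
    have "a [^] (- k) \<in> Bset T" using B.m_inv_closed[OF k] e by simp
    then have "a [^] nat (- k) \<in> Bset T" using kneg by (simp add: pow_nat)
    moreover have "a [^] nat (- k) \<notin> Bset T" using nm[rule_format, of "nat (- k)"] kneg by simp
    ultimately show False by blast
  qed
qed

lemma pow_eq_diff:
  assumes T: "T \<subseteq> carrier G" and a: "a \<in> carrier G" and b: "b \<in> Bset T" "b' \<in> Bset T"
    and e: "b \<otimes> a [^] (k::int) = b' \<otimes> a [^] (k'::int)"
  shows "inv b' \<otimes> b = a [^] (k' - k)" "a [^] (k' - k) \<in> Bset T"
proof -
  interpret B: subgroup "Bset T" G by (rule Bset_subgroup[OF T])
  have bc: "b \<in> carrier G" "b' \<in> carrier G" using b B.subset by auto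
  have "inv b' \<otimes> (b \<otimes> a [^] k) \<otimes> inv (a [^] k) = inv b' \<otimes> (b' \<otimes> a [^] k') \<otimes> inv (a [^] k)"
    using e by simp
  then show 1: "inv b' \<otimes> b = a [^] (k' - k)" using bc a by (simp add: m_assoc int_pow_diff)
  show "a [^] (k' - k) \<in> Bset T" using B.m_closed[OF B.m_inv_closed[OF b(2)] b(1)] 1 by simp
qed

lemma step_FI_free:
  assumes T: "T \<subseteq> carrier G" and a: "a \<in> carrier G"
    and nm: "\<forall>m::nat. m > 0 \<longrightarrow> a [^] m \<notin> Bset T"
  shows "HM (insert a T)"
proof -
  interpret B: subgroup "Bset T" G by (rule Bset_subgroup[OF T])
  define f :: "'a \<Rightarrow> rat" where "f x = of_int (THE k. \<exists>b\<in>Bset T. x = b \<otimes> a [^] (k::int))" for x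
  have feq: "f (b \<otimes> a [^] k) = of_int k" if b: "b \<in> Bset T" for b k
  proof -
    have "(THE k'. \<exists>b'\<in>Bset T. b \<otimes> a [^] k = b' \<otimes> a [^] (k'::int)) = k"
    proof (rule the_equality)
      show "\<exists>b'\<in>Bset T. b \<otimes> a [^] k = b' \<otimes> a [^] k" using b by blast
      fix k' assume "\<exists>b'\<in>Bset T. b \<otimes> a [^] k = b' \<otimes> a [^] (k'::int)"
      then obtain b' where b': "b' \<in> Bset T" "b \<otimes> a [^] k = b' \<otimes> a [^] k'" by blast
      have "k' - k = 0" using pow_in_zero[OF T a nm pow_eq_diff(2)[OF T a b b'(1) b'(2)]] .
      then show "k' = k" by simp
    qed
    then show ?thesis unfolding f_def by simp
  qed
  have "\<forall>x\<in>Bset (insert a T). \<forall>y\<in>Bset (insert a T). f (x \<otimes> y) = f x + f y"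
  proof (intro ballI)
    fix x y assume x: "x \<in> Bset (insert a T)" and y: "y \<in> Bset (insert a T)"
    obtain b and k :: int where bk: "b \<in> Bset T" "x = b \<otimes> a [^] k" using ins_decomp[OF T a x] by blast
    obtain b' and m :: int where bm: "b' \<in> Bset T" "y = b' \<otimes> a [^] m" using ins_decomp[OF T a y] by blast
    have "x \<otimes> y = (b \<otimes> (a [^] k \<otimes> b' \<otimes> inv (a [^] k))) \<otimes> a [^] (k + m)"
      using ins_prod(1)[OF T a bk(1) bm(1)] bk bm by simp
    moreover have "b \<otimes> (a [^] k \<otimes> b' \<otimes> inv (a [^] k)) \<in> Bset T"
      using B.m_closed[OF bk(1) ins_prod(2)[OF T a bk(1) bm(1)]] .
    ultimately show "f (x \<otimes> y) = f x + f y" using feq bk bm by simp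
  qed
  moreover have "\<forall>d\<in>DD. f d = 0"
  proof
    fix d assume d: "d \<in> DD"
    have dB: "d \<in> Bset T" using d DD_Bset by auto
    have "d = d \<otimes> a [^] (0::int)" using dB B.subset by auto
    then show "f d = 0" using feq[OF dB, of 0] by simp
  qed
  moreover have "\<exists>x\<in>Bset (insert a T). f x \<noteq> 0"
  proof
    have "a = \<one> \<otimes> a [^] (1::int)" using a by simp
    then show "f a \<noteq> 0" using feq[OF B.one_closed, of 1] by simp
    show "a \<in> Bset (insert a T)" unfolding Bset_def by (rule generate.incl) simp
  qed
  ultimately show ?thesis unfolding HM_def by blast
qed

lemma step_HM:
  assumes T: "T \<subseteq> carrier G" and a: "a \<in> carrier G" and hm: "HM T"
  shows "HM (insert a T)"
proof -
  interpret B: subgroup "Bset T" G by (rule Bset_subgroup[OF T])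
  obtain f :: "'a \<Rightarrow> rat" where fh: "\<And>x y. x \<in> Bset T \<Longrightarrow> y \<in> Bset T \<Longrightarrow> f (x \<otimes> y) = f x + f y"
    and fD: "\<And>d. d \<in> DD \<Longrightarrow> f d = 0" and fnz: "\<exists>x\<in>Bset T. f x \<noteq> 0"
    using hm unfolding HM_def by blast
  have fh': "\<forall>x\<in>Bset T. \<forall>y\<in>Bset T. f (x \<otimes> y) = f x + f y" using fh by blast
  have fb: "f \<one> = 0" "\<And>x. x \<in> Bset T \<Longrightarrow> f (inv x) = - f x"
     "\<And>x n. x \<in> Bset T \<Longrightarrow> f (x [^] (n::int)) = of_int n * f x"
    using addhom_basic[OF B.subgroup_axioms, of f] fh' by auto
  define q :: rat where "q = (if \<exists>m::nat. m > 0 \<and> a [^] m \<in> Bset T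
     then f (a [^] (SOME m::nat. m > 0 \<and> a [^] m \<in> Bset T)) / of_nat (SOME m::nat. m > 0 \<and> a [^] m \<in> Bset T)
     else 0)"
  have key: "f (a [^] j) = of_int j * q" if j: "a [^] (j::int) \<in> Bset T" for j
  proof (cases "\<exists>m::nat. m > 0 \<and> a [^] m \<in> Bset T")
    case True
    define m0 where "m0 = (SOME m::nat. m > 0 \<and> a [^] m \<in> Bset T)"
    have m0: "m0 > 0" "a [^] m0 \<in> Bset T" using someI_ex[OF True] unfolding m0_def by auto
    have qd: "q = f (a [^] m0) / of_nat m0" unfolding q_def m0_def using True by simp
    have am0: "a [^] (int m0) \<in> Bset T" using m0(2) by (simp add: int_pow_int)
    have "f ((a [^] (int m0)) [^] j) = of_int j * f (a [^] (int m0))" by (rule fb(3)[OF am0])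
    moreover have "f ((a [^] j) [^] (int m0)) = of_int (int m0) * f (a [^] j)" by (rule fb(3)[OF j])
    moreover have "(a [^] (int m0)) [^] j = (a [^] j) [^] (int m0)" using a by (simp add: int_pow_pow mult.commute)
    ultimately have "of_int j * f (a [^] m0) = of_nat m0 * f (a [^] j)" by (simp add: int_pow_int)
    then show ?thesis unfolding qd using m0(1) by (simp add: field_simps)
  next
    case False
    have "j = 0" using pow_in_zero[OF T a _ j] False by blast
    then show ?thesis using fb(1) by simp
  qed
  define f' :: "'a \<Rightarrow> rat" where
    "f' x = (THE v. \<exists>b\<in>Bset T. \<exists>k::int. x = b \<otimes> a [^] k \<and> v = f b + of_int k * q)" for x
  have f'eq: "f' (b \<otimes> a [^] k) = f b + of_int k * q" if b: "b \<in> Bset T" for b k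
  proof -
    have "(THE v. \<exists>b'\<in>Bset T. \<exists>k'::int. b \<otimes> a [^] k = b' \<otimes> a [^] k' \<and> v = f b' + of_int k' * q) = f b + of_int k * q"
    proof (rule the_equality)
      show "\<exists>b'\<in>Bset T. \<exists>k'::int. b \<otimes> a [^] k = b' \<otimes> a [^] k' \<and> f b + of_int k * q = f b' + of_int k' * q"
        using b by blast
      fix v assume "\<exists>b'\<in>Bset T. \<exists>k'::int. b \<otimes> a [^] k = b' \<otimes> a [^] k' \<and> v = f b' + of_int k' * q"
      then obtain b' and k' :: int where b': "b' \<in> Bset T" "b \<otimes> a [^] k = b' \<otimes> a [^] k'" "v = f b' + of_int k' * q"
        by blast
      have e1: "inv b' \<otimes> b = a [^] (k' - k)" and e2: "a [^] (k' - k) \<in> Bset T"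
        using pow_eq_diff[OF T a b b'(1) b'(2)] by auto
      have "f (inv b' \<otimes> b) = - f b' + f b" using fh[OF B.m_inv_closed[OF b'(1)] b] fb(2)[OF b'(1)] by simp
      moreover have "f (inv b' \<otimes> b) = of_int (k' - k) * q" using e1 key[OF e2] by simp
      ultimately show "v = f b + of_int k * q" using b'(3) by (simp add: algebra_simps)
    qed
    then show ?thesis unfolding f'_def by simp
  qed
  have "\<forall>x\<in>Bset (insert a T). \<forall>y\<in>Bset (insert a T). f' (x \<otimes> y) = f' x + f' y"
  proof (intro ballI)
    fix x y assume x: "x \<in> Bset (insert a T)" and y: "y \<in> Bset (insert a T)"
    obtain b and k :: int where bk: "b \<in> Bset T" "x = b \<otimes> a [^] k" using ins_decomp[OF T a x] by blast
    obtain b' and m :: int where bm: "b' \<in> Bset T" "y = b' \<otimes> a [^] m" using ins_decomp[OF T a y] by blast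
    let ?c = "a [^] k \<otimes> b' \<otimes> inv (a [^] k)"
    have c: "?c \<in> Bset T" using ins_prod(2)[OF T a bk(1) bm(1)] .
    have bc: "b' \<in> carrier G" using bm B.subset by auto
    have "x \<otimes> y = (b \<otimes> ?c) \<otimes> a [^] (k + m)"
      using ins_prod(1)[OF T a bk(1) bm(1)] bk bm by simp
    moreover have "f ?c = f b'"
    proof -
      have "?c = (?c \<otimes> inv b') \<otimes> b'" using bc a by (simp add: m_assoc)
      moreover have "?c \<otimes> inv b' \<in> DD" using comm_in_DD[OF _ bc, of "a [^] k"] a by simp
      ultimately show ?thesis using fh[OF _ bm(1), of "?c \<otimes> inv b'"] fD DD_Bset by auto
    qed
    ultimately show "f' (x \<otimes> y) = f' x + f' y"
      using f'eq bk bm B.m_closed[OF bk(1) c] fh[OF bk(1) c] by (simp add: algebra_simps)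
  qed
  moreover have "\<forall>d\<in>DD. f' d = 0"
  proof
    fix d assume d: "d \<in> DD"
    have dB: "d \<in> Bset T" using d DD_Bset by auto
    have "d = d \<otimes> a [^] (0::int)" using dB B.subset by auto
    then show "f' d = 0" using f'eq[OF dB, of 0] fD[OF d] by simp
  qed
  moreover have "\<exists>x\<in>Bset (insert a T). f' x \<noteq> 0"
  proof -
    obtain x where x: "x \<in> Bset T" "f x \<noteq> 0" using fnz by blast
    have "x = x \<otimes> a [^] (0::int)" using x B.subset by auto
    then have "f' x = f x" using f'eq[OF x(1), of 0] by simp
    moreover have "x \<in> Bset (insert a T)" using x(1) mono_generate[of "DD \<union> T" "DD \<union> insert a T"] unfolding Bset_def by blast
    ultimately show ?thesis using x(2) by (intro bexI[of _ x]) auto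
  qed
  ultimately show ?thesis unfolding HM_def by blast
qed

end

context group begin

lemma FI_or_HM: "finite T \<Longrightarrow> T \<subseteq> carrier G \<Longrightarrow> FI T \<or> HM T"
proof (induction T rule: finite_induct)
  case empty
  have "FI {}" unfolding FI_def Bset_empty
  proof (intro exI[of _ "{\<one>}"] conjI ballI)
    fix x assume "x \<in> DD"
    then have "x = x \<otimes> \<one>" using derived_in_carrier[of "carrier G"] by auto
    then show "\<exists>r\<in>{\<one>}. \<exists>d\<in>DD. x = d \<otimes> r" using \<open>x \<in> DD\<close> by blast
  qed auto
  then show ?case by simp
next
  case (insert a T)
  have T: "T \<subseteq> carrier G" and a: "a \<in> carrier G" using insert.prems by auto
  from insert.IH[OF T] show ?case
  proof
    assume fi: "FI T"
    show ?thesis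
    proof (cases "\<exists>m::nat. m > 0 \<and> a [^] m \<in> Bset T")
      case True
      then obtain m :: nat where "m > 0" "a [^] m \<in> Bset T" by blast
      then show ?thesis using step_FI_pow[OF T a fi] by blast
    next
      case False
      then show ?thesis using step_FI_free[OF T a] by blast
    qed
  next
    assume "HM T" then show ?thesis using step_HM[OF T a] by blast
  qed
qed

lemma FI_finite_rcosets:
  assumes "FI T" and "Bset T = carrier G"
  shows "finite (rcosets DD)"
proof -
  obtain R where R: "finite R" "R \<subseteq> carrier G" "\<And>x. x \<in> Bset T \<Longrightarrow> \<exists>r\<in>R. \<exists>d\<in>DD. x = d \<otimes> r"
    using assms(1) unfolding FI_def by blast
  have "rcosets DD \<subseteq> (\<lambda>r. DD #> r) ` R"
  proof
    fix C assume "C \<in> rcosets DD"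
    then obtain x where x: "x \<in> carrier G" "C = DD #> x" unfolding RCOSETS_def by blast
    obtain r d where rd: "r \<in> R" "d \<in> DD" "x = d \<otimes> r" using R(3) x(1) assms(2) by blast
    have "x \<in> DD #> r" unfolding r_coset_def using rd by blast
    then have "DD #> r = DD #> x" using repr_independence[OF _ _ DD_subgroup] rd(1) R(2) by blast
    then show "C \<in> (\<lambda>r. DD #> r) ` R" using x rd by blast
  qed
  then show ?thesis using R(1) finite_subset by blast
qed

lemma exists_rat_hom:
  assumes fg: "finitely_generated_group G" and inf: "infinite (rcosets DD)"
  shows "\<exists>S (f::'a \<Rightarrow> rat). finite S \<and> S \<subseteq> carrier G \<and> generate G S = carrier G \<and>
     (\<forall>x\<in>carrier G. \<forall>y\<in>carrier G. f (x \<otimes> y) = f x + f y) \<and> (\<exists>x\<in>carrier G. f x \<noteq> 0)"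
proof -
  obtain S where S: "finite S" "S \<subseteq> carrier G" "generate G S = carrier G"
    using fg unfolding finitely_generated_group_def by blast
  have BS: "Bset S = carrier G"
  proof
    show "Bset S \<subseteq> carrier G" unfolding Bset_def
      by (rule generate_incl) (use S(2) derived_in_carrier[of "carrier G"] in auto)
    show "carrier G \<subseteq> Bset S" unfolding Bset_def using S(3) mono_generate[of S "DD \<union> S"] by auto
  qed
  have "FI S \<or> HM S" using FI_or_HM[OF S(1,2)] .
  moreover have "\<not> FI S" using FI_finite_rcosets[OF _ BS] inf by blast
  ultimately have "HM S" by blast
  then show ?thesis unfolding HM_def BS using S by blast
qed

end

lemma denom_exists:
  fixes g :: "'x \<Rightarrow> rat"
  shows "finite S \<Longrightarrow> \<exists>N::int. N > 0 \<and> (\<forall>s\<in>S. rat_of_int N * g s \<in> \<int>)"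
proof (induction S rule: finite_induct)
  case empty then show ?case by (intro exI[of _ 1]) simp
next
  case (insert a S)
  obtain N :: int where N: "N > 0" "\<forall>s\<in>S. rat_of_int N * g s \<in> \<int>" using insert.IH by blast
  obtain p d where pd: "quotient_of (g a) = (p, d)" by (cases "quotient_of (g a)") auto
  have d: "d > 0" using quotient_of_denom_pos[OF pd] .
  have ga: "g a = of_int p / of_int d" using quotient_of_div[OF pd] .
  have "rat_of_int (N * d) * g a = rat_of_int (N * p)" using d by (simp add: ga)
  then have "rat_of_int (N * d) * g a \<in> \<int>" by (metis Ints_of_int)
  moreover have "rat_of_int (N * d) * g s \<in> \<int>" if "s \<in> S" for s
  proof -
    have "rat_of_int (N * d) * g s = rat_of_int d * (rat_of_int N * g s)" by simp
    then show ?thesis using N(2) that by (metis Ints_mult Ints_of_int)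
  qed
  ultimately show ?case using N(1) d by (intro exI[of _ "N * d"]) auto
qed

context group begin

lemma exists_chi:
  assumes fg: "finitely_generated_group G" and inf: "infinite (rcosets DD)"
  shows "\<exists>(chi::'a \<Rightarrow> int) t. t \<in> carrier G \<and> chi t = 1 \<and>
     (\<forall>x\<in>carrier G. \<forall>y\<in>carrier G. chi (x \<otimes> y) = chi x + chi y)"
proof -
  obtain S and f :: "'a \<Rightarrow> rat" where S: "finite S" "S \<subseteq> carrier G" "generate G S = carrier G"
    and fh: "\<forall>x\<in>carrier G. \<forall>y\<in>carrier G. f (x \<otimes> y) = f x + f y" and fnz: "\<exists>x\<in>carrier G. f x \<noteq> 0"
    using exists_rat_hom[OF fg inf] by blast
  have fb: "f \<one> = 0" "\<And>x. x \<in> carrier G \<Longrightarrow> f (inv x) = - f x"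
    using addhom_basic[OF subgroup_self, of f] fh by auto
  obtain N :: int where N: "N > 0" "\<forall>s\<in>S. rat_of_int N * f s \<in> \<int>" using denom_exists[OF S(1)] by blast
  have NZ: "rat_of_int N * f x \<in> \<int>" if x: "x \<in> carrier G" for x
  proof -
    have "x \<in> generate G S" using x S(3) by simp
    then show ?thesis
    proof (induction rule: generate.induct)
      case one then show ?case using fb(1) by simp
    next
      case (incl h) then show ?case using N(2) by blast
    next
      case (inv h)
      have "rat_of_int N * f (inv h) = - (rat_of_int N * f h)" using inv S(2) fb(2) by auto
      then show ?case using N(2) inv by (metis Ints_minus)
    next
      case (eng h1 h2)
      have c: "h1 \<in> carrier G" "h2 \<in> carrier G" using eng.hyps generate_incl[OF S(2)] by auto
      have "rat_of_int N * f (h1 \<otimes> h2) = rat_of_int N * f h1 + rat_of_int N * f h2"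
        using fh c by (simp add: algebra_simps)
      then show ?case using eng.IH by (metis Ints_add)
    qed
  qed
  define g where "g x = \<lfloor>rat_of_int N * f x\<rfloor>" for x
  have gof: "rat_of_int (g x) = rat_of_int N * f x" if "x \<in> carrier G" for x
    using NZ[OF that] unfolding g_def by (metis Ints_cases floor_of_int)
  have gh: "g (x \<otimes> y) = g x + g y" if "x \<in> carrier G" "y \<in> carrier G" for x y
  proof -
    have "rat_of_int (g (x \<otimes> y)) = rat_of_int (g x + g y)"
      using gof that fh by (simp add: algebra_simps)
    then show ?thesis by linarith
  qed
  have gb: "\<And>x. x \<in> carrier G \<Longrightarrow> g (inv x) = - g x"
       "\<And>x n. x \<in> carrier G \<Longrightarrow> g (x [^] (n::int)) = n * g x"
    using addhom_basic[OF subgroup_self, of g] gh by auto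
  obtain x0 where x0: "x0 \<in> carrier G" "f x0 \<noteq> 0" using fnz by blast
  have gx0: "g x0 \<noteq> 0" using gof[OF x0(1)] x0(2) N(1) by auto
  define P where "P n \<longleftrightarrow> n > 0 \<and> (\<exists>x\<in>carrier G. g x = int n)" for n :: nat
  have "\<exists>n. P n"
  proof (cases "g x0 > 0")
    case True then show ?thesis unfolding P_def using x0(1) by (intro exI[of _ "nat (g x0)"]) auto
  next
    case False
    then have "g (inv x0) > 0" using gb(1)[OF x0(1)] gx0 by simp
    then show ?thesis unfolding P_def using x0(1)
      by (intro exI[of _ "nat (g (inv x0))"]) (auto intro!: bexI[of _ "inv x0"])
  qed
  define d where "d = (LEAST n. P n)"
  have Pd: "P d" unfolding d_def using \<open>\<exists>n. P n\<close> by (metis LeastI)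
  obtain t0 where t0: "t0 \<in> carrier G" "g t0 = int d" and dpos: "d > 0" using Pd unfolding P_def by blast
  have dvd: "int d dvd g x" if x: "x \<in> carrier G" for x
  proof -
    define q where "q = g x div int d"
    define r where "r = g x mod int d"
    have r: "0 \<le> r" "r < int d" using dpos unfolding r_def by auto
    have "g (x \<otimes> inv (t0 [^] q)) = g x - q * int d"
      using gh[OF x] gb t0 by simp
    also have "\<dots> = r" unfolding q_def r_def by (simp add: minus_div_mult_eq_mod[symmetric] algebra_simps)
    finally have gr: "g (x \<otimes> inv (t0 [^] q)) = r" .
    have "r = 0"
    proof (rule ccontr)
      assume "r \<noteq> 0"
      then have "P (nat r)" unfolding P_def using gr x t0(1) r(1) by (auto intro!: bexI[of _ "x \<otimes> inv (t0 [^] q)"])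
      then have "d \<le> nat r" unfolding d_def by (rule Least_le)
      then show False using r by linarith
    qed
    then show ?thesis unfolding r_def by auto
  qed
  define chi where "chi x = g x div int d" for x
  have "chi t0 = 1" unfolding chi_def using t0 dpos by simp
  moreover have "\<forall>x\<in>carrier G. \<forall>y\<in>carrier G. chi (x \<otimes> y) = chi x + chi y"
    unfolding chi_def using gh dvd by (simp add: div_plus_div_distrib_dvd_left)
  ultimately show ?thesis using t0(1) by blast
qed

end

theorem mainTheorem4:
  fixes F :: "('a, 'c) monoid_scheme" and G :: "('b, 'd) monoid_scheme"
  assumes "group F" and "group G"
    and "finitely_generated_group F"
    and "infinite (rcosets\<^bsub>F\<^esub> (derived F (carrier F)))"
  shows "card_dvd (derived G (carrier G)) (surj_homs F G)"
proof -
  obtain chi :: "'a \<Rightarrow> int" and t where ct: "t \<in> carrier F" "chi t = 1"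
    "\<forall>x\<in>carrier F. \<forall>y\<in>carrier F. chi (x \<otimes>\<^bsub>F\<^esub> y) = chi x + chi y"
    using group.exists_chi[OF assms(1) assms(3) assms(4)] by blast
  have tw: "twist G F chi t"
    unfolding twist_def twist_axioms_def using assms(1,2) ct by blast
  show ?thesis by (rule twist.partB[OF tw])
qed

end
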